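(* Let $q$ be a prime power, $m\ge1$, $1\le k\le n$, $g_1,\dots,g_n\in\mathbb{F}_{q^m}$ linearly independent over $\mathbb{F}_q$, $\mathbf g=(g_1,\dots,g_n)$, $C$ the Gabidulin code defined below, $\mathbf r\in\mathbb{F}_{q^m}^n$, and $t:=\min\{d_R(\mathbf c,\mathbf r):\mathbf c\in C\}$. Let $B=\{b^{(1)},b^{(2)}\}$ be a minimal basis of the interpolation module $\mathfrak M(\mathbf r)$ with respect to the $(0,k-1)$-weighted term-over-position order with $\mathrm{lpos}(b^{(i)})=i$ ($i=1,2$), write $b^{(i)}=[b^{(i)}_1\ \ b^{(i)}_2]$, and let $\ell_i$ be the $(0,k-1)$-weighted $q$-degree of $b^{(i)}$. Then $\ell_2\le t+k-1$, or equivalently $\mathrm{qdeg}(b^{(2)}_2)\le t$. Furthermore, $\ell_1=\mathrm{qdeg}(b^{(1)}_1)\ge n-t$.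
   Context: Write $[i]:=q^i$. A $q$-linearized polynomial is $f(x)=\sum_{i=0}^{d}a_ix^{[i]}$, $a_i\in\mathbb{F}_{q^m}$; if $a_d\ne0$, $d=\mathrm{qdeg}(f)$ ($\mathrm{qdeg}(0)=-\infty$). $\mathcal{L}_q(x,q^m)$ is the ring of these under addition and composition $\circ$. $\Pi_{\mathbf g}(x)=\prod_{u\in\langle g_1,\dots,g_n\rangle}(x-u)$ ($\mathbb{F}_q$-span), of $q$-degree $n$. $\Lambda_{\mathbf g,\mathbf r}(x)=\sum_{i=1}^n(-1)^{n-i}r_i\det(\mathfrak D_i(\mathbf g,x))/\det(M_n(g_1,\dots,g_n))$ ($M_n(v_1,\dots,v_s)$ the $n\times s$ matrix with $(j,l)$ entry $v_l^{[j-1]}$; $\mathfrak D_i(\mathbf g,x)$ is $M_n(g_1,\dots,g_n,x)$ without column $i$), with $\Lambda_{\mathbf g,\mathbf r}(g_i)=r_i$. $C=\{(m(g_1),\dots,m(g_n)):m\in\mathcal{L}_q(x,q^m),\ \mathrm{qdeg}(m)<k\}$. $d_R(\mathbf a,\mathbf b)$ is the $\mathbb{F}_q$-rank of the $m\times n$ $\mathbb{F}_q$-matrix obtained by expanding the coordinates of $\mathbf a-\mathbf b$ in a fixed $\mathbb{F}_q$-basis of $\mathbb{F}_{q^m}$. $\mathfrak M(\mathbf r)$ is the set of all $\beta\circ[\Pi_{\mathbf g}\ \ 0]+\gamma\circ[-\Lambda_{\mathbf g,\mathbf r}\ \ x]$, $\beta,\gamma\in\mathcal{L}_q(x,q^m)$,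 with $h\circ[f_1\ f_2]=[h\circ f_1\ \ h\circ f_2]$. Monomials: $x^{[i]}e_j$, $j\in\{1,2\}$. $(0,k-1)$-weighted term-over-position order: $w_1=0,w_2=k-1$, $x^{[i_1]}e_{j_1}<x^{[i_2]}e_{j_2}$ iff $i_1+w_{j_1}<i_2+w_{j_2}$ or (equality and $j_1<j_2$). $\mathrm{lm},\mathrm{lt},\mathrm{lpos}$: greatest monomial, its term, its coordinate. Weighted $q$-degree of $[f_1\ f_2]$: $\max\{\mathrm{qdeg} f_1,\mathrm{qdeg} f_2+k-1\}$. Basis: generating set with $\sum a_i\circ f^{(i)}=0\Rightarrow a_i=0$. $f$ reduces modulo a set $F$ of nonzero elements in one step if $h=f-\sum_i(b_ix^{[a_i]})\circ f^{(i)}$, $f^{(i)}\in F$, $b_i\in\mathbb{F}_{q^m}$, $a_i\ge0$, with $\mathrm{lm}(f)=x^{[a_i]}\circ\mathrm{lm}(f^{(i)})$ and $\mathrm{lt}(f)=\sum_i(b_ix^{[a_i]})\circ\mathrm{lt}(f^{(i)})$; a basis $B$ is minimal if no $b\in B$ can be reduced modulo $B\setminus\{b\}$. *)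

theory Defs
  imports "HOL-Computational_Algebra.Polynomial" "HOL-Library.Product_Plus"
          "Jordan_Normal_Form.Determinant"
begin

(* The subfield F_q of the finite field 'a (of order q^m): fixed points of x \<mapsto> x^q *)
definition Fq :: "nat \<Rightarrow> 'a::field set" where
  "Fq q = {x. x ^ q = x}"

definition prime_power :: "nat \<Rightarrow> bool" where
  "prime_power q \<longleftrightarrow> (\<exists>p e. prime p \<and> e \<ge> 1 \<and> q = p ^ e)"

definition fq_indep :: "nat \<Rightarrow> (nat \<Rightarrow> 'a::field) \<Rightarrow> nat set \<Rightarrow> bool" where
  "fq_indep q v I \<longleftrightarrow>
     (\<forall>c. (\<forall>i\<in>I. c i \<in> Fq q) \<and> (\<Sum>i\<in>I. c i * v i) = 0 \<longrightarrow> (\<forall>i\<in>I. c i = 0))"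

definition fq_span :: "nat \<Rightarrow> nat \<Rightarrow> (nat \<Rightarrow> 'a::field) \<Rightarrow> 'a set" where
  "fq_span q n g = {\<Sum>i<n. c i * g i | c. \<forall>i<n. c i \<in> Fq q}"

(* q-linearized polynomials: x^[i] = x^(q^i) is  monom 1 (q^i);  composition is pcompose *)
definition qlin :: "nat \<Rightarrow> 'a::zero poly \<Rightarrow> bool" where
  "qlin q f \<longleftrightarrow> (\<forall>i. coeff f i \<noteq> 0 \<longrightarrow> (\<exists>j. i = q ^ j))"

definition qdeg :: "nat \<Rightarrow> 'a::zero poly \<Rightarrow> nat" where
  "qdeg q f = Max {i. coeff f (q ^ i) \<noteq> 0}"

(* rank distance: F_q-rank of the m x n matrix of F_q-coordinates of a - b,
   i.e. the maximal number of F_q-linearly independent columns *)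
definition dR :: "nat \<Rightarrow> nat \<Rightarrow> (nat \<Rightarrow> 'a::field) \<Rightarrow> (nat \<Rightarrow> 'a) \<Rightarrow> nat" where
  "dR q n a b = Max {card I | I. I \<subseteq> {..<n} \<and> fq_indep q (\<lambda>i. a i - b i) I}"

(* Gabidulin code, codewords as functions on {0..<n} (zero outside) *)
definition gabidulin :: "nat \<Rightarrow> nat \<Rightarrow> nat \<Rightarrow> (nat \<Rightarrow> 'a::field) \<Rightarrow> (nat \<Rightarrow> 'a) set" where
  "gabidulin q n k g = {c. \<exists>f. qlin q f \<and> (f = 0 \<or> qdeg q f < k) \<and>
      (\<forall>i<n. c i = poly f (g i)) \<and> (\<forall>i\<ge>n. c i = 0)}"

definition Pi_g :: "nat \<Rightarrow> nat \<Rightarrow> (nat \<Rightarrow> 'a::field) \<Rightarrow> 'a poly" where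
  "Pi_g q n g = (\<Prod>u\<in>fq_span q n g. [:-u, 1:])"

(* M_n(g_1,...,g_n,x): n x (n+1) matrix, entry (j,l) = v_l^[j] (0-based), last column x *)
definition Mext :: "nat \<Rightarrow> nat \<Rightarrow> (nat \<Rightarrow> 'a::field) \<Rightarrow> nat \<Rightarrow> nat \<Rightarrow> 'a poly" where
  "Mext q n g j l = (if l < n then [: g l ^ (q ^ j) :] else monom 1 (q ^ j))"

(* D_i(g,x): M_n(g,x) without column i (0-based) *)
definition Dmat :: "nat \<Rightarrow> nat \<Rightarrow> (nat \<Rightarrow> 'a::field) \<Rightarrow> nat \<Rightarrow> 'a poly mat" where
  "Dmat q n g i = mat n n (\<lambda>(j, l). Mext q n g j (if l < i then l else Suc l))"

definition Mmat :: "nat \<Rightarrow> nat \<Rightarrow> (nat \<Rightarrow> 'a::field) \<Rightarrow> 'a mat" where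
  "Mmat q n g = mat n n (\<lambda>(j, l). g l ^ (q ^ j))"

(* Lambda_{g,r}; the 1-based sign (-1)^(n-i) becomes (-1)^(n-1-i) for 0-based i *)
definition Lambda :: "nat \<Rightarrow> nat \<Rightarrow> (nat \<Rightarrow> 'a::field) \<Rightarrow> (nat \<Rightarrow> 'a) \<Rightarrow> 'a poly" where
  "Lambda q n g r = smult (inverse (det (Mmat q n g)))
     (\<Sum>i<n. smult ((-1) ^ (n - 1 - i) * r i) (det (Dmat q n g i)))"

(* elements of L_q(x,q^m)^2 are pairs; h \<circ> [f1 f2] = [h\<circ>f1  h\<circ>f2] *)
definition lcomp :: "'a::comm_ring_1 poly \<Rightarrow> 'a poly \<times> 'a poly \<Rightarrow> 'a poly \<times> 'a poly" where
  "lcomp h v = (pcompose h (fst v), pcompose h (snd v))"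

definition interp_module :: "nat \<Rightarrow> nat \<Rightarrow> (nat \<Rightarrow> 'a::field) \<Rightarrow> (nat \<Rightarrow> 'a)
    \<Rightarrow> ('a poly \<times> 'a poly) set" where
  "interp_module q n g r = {lcomp \<beta> (Pi_g q n g, 0) + lcomp \<gamma> (- Lambda q n g r, monom 1 1)
      | \<beta> \<gamma>. qlin q \<beta> \<and> qlin q \<gamma>}"

definition is_basis :: "nat \<Rightarrow> ('a::field poly \<times> 'a poly) set \<Rightarrow> ('a poly \<times> 'a poly) set \<Rightarrow> bool" where
  "is_basis q M B \<longleftrightarrow> finite B \<and> B \<subseteq> M \<and>
     (\<forall>v\<in>M. \<exists>a. (\<forall>f\<in>B. qlin q (a f)) \<and> v = (\<Sum>f\<in>B. lcomp (a f) f)) \<and>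
     (\<forall>a. (\<forall>f\<in>B. qlin q (a f)) \<and> (\<Sum>f\<in>B. lcomp (a f) f) = 0 \<longrightarrow> (\<forall>f\<in>B. a f = 0))"

(* monomials x^[i] e_j are pairs (i,j), j \<in> {1,2}; (0,k-1)-weighted TOP order *)
definition wval :: "nat \<Rightarrow> nat \<times> nat \<Rightarrow> nat" where
  "wval k m = fst m + (if snd m = 1 then 0 else k - 1)"

definition mless :: "nat \<Rightarrow> nat \<times> nat \<Rightarrow> nat \<times> nat \<Rightarrow> bool" where
  "mless k m1 m2 \<longleftrightarrow> wval k m1 < wval k m2 \<or> (wval k m1 = wval k m2 \<and> snd m1 < snd m2)"

definition comp_of :: "nat \<Rightarrow> 'a poly \<times> 'a poly \<Rightarrow> 'a poly" where
  "comp_of j v = (if j = 1 then fst v else snd v)"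

definition supp :: "nat \<Rightarrow> 'a::zero poly \<times> 'a poly \<Rightarrow> (nat \<times> nat) set" where
  "supp q v = {(i, j). j \<in> {1, 2} \<and> coeff (comp_of j v) (q ^ i) \<noteq> 0}"

definition lm :: "nat \<Rightarrow> nat \<Rightarrow> 'a::zero poly \<times> 'a poly \<Rightarrow> nat \<times> nat" where
  "lm q k v = (THE m. m \<in> supp q v \<and> (\<forall>m'\<in>supp q v. m' \<noteq> m \<longrightarrow> mless k m' m))"

definition lpos :: "nat \<Rightarrow> nat \<Rightarrow> 'a::zero poly \<times> 'a poly \<Rightarrow> nat" where
  "lpos q k v = snd (lm q k v)"

definition lt :: "nat \<Rightarrow> nat \<Rightarrow> 'a::zero poly \<times> 'a poly \<Rightarrow> 'a poly \<times> 'a poly" where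
  "lt q k v = (let (i, j) = lm q k v; c = coeff (comp_of j v) (q ^ i) in
     if j = 1 then (monom c (q ^ i), 0) else (0, monom c (q ^ i)))"

(* weighted q-degree max{qdeg f1, qdeg f2 + k - 1} (over nonzero components) *)
definition wdeg :: "nat \<Rightarrow> nat \<Rightarrow> 'a::zero poly \<times> 'a poly \<Rightarrow> nat" where
  "wdeg q k v = Max (wval k ` supp q v)"

(* one-step reducibility of f modulo F: terms (b_i, a_i, f^(i)) *)
definition reducible :: "nat \<Rightarrow> nat \<Rightarrow> ('a::field poly \<times> 'a poly) set \<Rightarrow> 'a poly \<times> 'a poly \<Rightarrow> bool" where
  "reducible q k F f \<longleftrightarrow> f \<noteq> 0 \<and> (\<exists>ts :: ('a \<times> nat \<times> ('a poly \<times> 'a poly)) list.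
     (\<forall>(b, a, g) \<in> set ts. g \<in> F \<and> g \<noteq> 0 \<and> lm q k f = (fst (lm q k g) + a, snd (lm q k g))) \<and>
     lt q k f = sum_list (map (\<lambda>(b, a, g). lcomp (monom b (q ^ a)) (lt q k g)) ts))"

definition minimal_basis :: "nat \<Rightarrow> nat \<Rightarrow> ('a::field poly \<times> 'a poly) set \<Rightarrow> ('a poly \<times> 'a poly) set \<Rightarrow> bool" where
  "minimal_basis q k M B \<longleftrightarrow> is_basis q M B \<and> (\<forall>b\<in>B. \<not> reducible q k (B - {b}) b)"

end

theory Submission
  imports Defs
begin

lemma card_ker_img:
  fixes h :: "'a::ab_group_add \<Rightarrow> 'b::ab_group_add" and V :: "'a set"
  assumes fin: "finite V" and cl: "\<And>x y. x \<in> V \<Longrightarrow> y \<in> V \<Longrightarrow> x - y \<in> V"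
    and hom: "\<And>x y. x \<in> V \<Longrightarrow> y \<in> V \<Longrightarrow> h (x - y) = h x - h y"
  shows "card V \<le> card (h ` V) * card {v\<in>V. h v = 0}"
proof -
  define pick where "pick y = (SOME v. v \<in> V \<and> h v = y)" for y
  have pick: "pick (h v) \<in> V \<and> h (pick (h v)) = h v" if "v \<in> V" for v
    unfolding pick_def by (rule someI[of _ v]) (use that in auto)
  define f where "f v = (h v, v - pick (h v))" for v
  have inj: "inj_on f V"
    by (auto simp: inj_on_def f_def)
  have sub: "f ` V \<subseteq> h ` V \<times> {v\<in>V. h v = 0}"
  proof
    fix z assume "z \<in> f ` V"
    then obtain v where v: "v \<in> V" "z = f v" by auto
    from pick[OF v(1)] have "v - pick (h v) \<in> V" "h (v - pick (h v)) = 0"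
      using cl hom v(1) by auto
    thus "z \<in> h ` V \<times> {v\<in>V. h v = 0}" using v by (auto simp: f_def)
  qed
  have "card V = card (f ` V)" using inj by (simp add: card_image)
  also have "\<dots> \<le> card (h ` V \<times> {v\<in>V. h v = 0})"
    by (rule card_mono[OF _ sub]) (use fin in auto)
  also have "\<dots> = card (h ` V) * card {v\<in>V. h v = 0}" by (rule card_cartesian_product)
  finally show ?thesis .
qed

locale gfq =
  fixes q :: nat and m :: nat and ty :: "'a::{field,finite} itself"
  assumes m1: "m \<ge> 1" and e_ex: "\<exists>e\<ge>1. q = CHAR('a) ^ e" and card: "card (UNIV :: 'a set) = q ^ m"
begin

lemma prime_char: "prime CHAR('a)"
  using prime_CHAR_semidom[where ?'a='a] finite_imp_CHAR_pos[where ?'a='a] by auto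

lemma q2: "q \<ge> 2"
proof -
  obtain e where e: "e \<ge> 1" "q = CHAR('a) ^ e" using e_ex by auto
  have "CHAR('a) \<ge> 2" using prime_char prime_ge_2_nat by blast
  hence "CHAR('a) ^ 1 \<le> CHAR('a) ^ e" using e(1) by (intro power_increasing) auto
  thus ?thesis using e \<open>CHAR('a) \<ge> 2\<close> by simp
qed

lemma qpow: "\<exists>e. q ^ s = CHAR('a) ^ e"
proof -
  obtain e where e: "q = CHAR('a) ^ e" using e_ex by auto
  show ?thesis by (rule exI[of _ "e * s"]) (simp add: e power_mult)
qed

lemma frob_add: "(x + y :: 'a) ^ (q ^ s) = x ^ (q ^ s) + y ^ (q ^ s)"
  using qpow[of s] freshmans_dream'[OF prime_char] by blast

lemma frob_add_poly: "(x + y :: 'a poly) ^ (q ^ s) = x ^ (q ^ s) + y ^ (q ^ s)"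
proof -
  have "prime CHAR('a poly)" using prime_char by simp
  moreover obtain e where "q ^ s = CHAR('a poly) ^ e" using qpow[of s] by auto
  ultimately show ?thesis using freshmans_dream' by blast
qed

lemma frob_sum: "(\<Sum>i\<in>A. f i :: 'a) ^ (q ^ s) = (\<Sum>i\<in>A. f i ^ (q ^ s))"
  using qpow[of s] freshmans_dream_sum'[OF prime_char] by blast

lemma frob_sum_poly: "(\<Sum>i\<in>A. f i :: 'a poly) ^ (q ^ s) = (\<Sum>i\<in>A. f i ^ (q ^ s))"
proof -
  have "prime CHAR('a poly)" using prime_char by simp
  moreover obtain e where "q ^ s = CHAR('a poly) ^ e" using qpow[of s] by auto
  ultimately show ?thesis using freshmans_dream_sum' by blast
qed

lemma frob_diff: "(x - y :: 'a) ^ (q ^ s) = x ^ (q ^ s) - y ^ (q ^ s)"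
  using frob_add[of "x - y" y s] by (simp add: algebra_simps)

lemma frob_diff_poly: "(x - y :: 'a poly) ^ (q ^ s) = x ^ (q ^ s) - y ^ (q ^ s)"
  using frob_add_poly[of "x - y" y s] by (simp add: algebra_simps)

lemma frob_uminus: "(- x :: 'a) ^ (q ^ s) = - (x ^ (q ^ s))"
  using frob_diff[of 0 x s] q2 by simp

lemma frob_uminus_poly: "(- x :: 'a poly) ^ (q ^ s) = - (x ^ (q ^ s))"
  using frob_diff_poly[of 0 x s] q2 by simp

lemma pow_card: "(x :: 'a) ^ (q ^ m) = x"
proof (cases "x = 0")
  case False
  let ?N = "card (UNIV :: 'a set)"
  have "x * (\<Prod>y\<in>UNIV-{0}. x * y) = x * x ^ (?N - 1) * \<Prod>(UNIV-{0})"
    by (simp add: prod.distrib mult_ac)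
  also have "x * x ^ (?N - 1) = x ^ Suc (?N - 1)"
    by (subst power_Suc) auto
  also have "Suc (?N - 1) = ?N"
    using finite_UNIV_card_ge_0[where ?'a = 'a] by simp
  also have "(\<Prod>y\<in>UNIV-{0}. x * y) = (\<Prod>y\<in>UNIV-{0}. y)"
    by (rule prod.reindex_bij_witness[of _ "\<lambda>y. y / x" "\<lambda>y. x * y"]) (use False in auto)
  finally show ?thesis using card by simp
qed (use q2 in auto)

lemma Fq_iff: "c \<in> Fq q \<longleftrightarrow> c ^ q = c" by (simp add: Fq_def)

lemma Fq_pow: "(c::'a) \<in> Fq q \<Longrightarrow> c ^ (q ^ s) = c"
proof (induction s)
  case (Suc s)
  have "c ^ (q ^ Suc s) = (c ^ q) ^ (q ^ s)" by (simp add: power_mult)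
  thus ?case using Suc by (simp add: Fq_def)
qed simp

lemma Fq_0 [simp]: "(0::'a) \<in> Fq q" using q2 by (simp add: Fq_def)
lemma Fq_1 [simp]: "(1::'a) \<in> Fq q" by (simp add: Fq_def)
lemma Fq_add: "(a::'a) \<in> Fq q \<Longrightarrow> b \<in> Fq q \<Longrightarrow> a + b \<in> Fq q"
  using frob_add[of a b 1] by (simp add: Fq_def)
lemma Fq_diff: "(a::'a) \<in> Fq q \<Longrightarrow> b \<in> Fq q \<Longrightarrow> a - b \<in> Fq q"
  using frob_diff[of a b 1] by (simp add: Fq_def)
lemma Fq_uminus: "(a::'a) \<in> Fq q \<Longrightarrow> - a \<in> Fq q"
  using frob_uminus[of a 1] by (simp add: Fq_def)
lemma Fq_mult: "(a::'a) \<in> Fq q \<Longrightarrow> b \<in> Fq q \<Longrightarrow> a * b \<in> Fq q"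
  by (simp add: Fq_def power_mult_distrib)
lemma Fq_inverse: "(a::'a) \<in> Fq q \<Longrightarrow> inverse a \<in> Fq q"
  by (simp add: Fq_def power_inverse)
lemma Fq_sum: "(\<And>i. i \<in> A \<Longrightarrow> f i \<in> Fq q) \<Longrightarrow> (\<Sum>i\<in>A. f i :: 'a) \<in> Fq q"
  by (induction A rule: infinite_finite_induct) (auto intro: Fq_add)

lemma card_Fq: "card (Fq q :: 'a set) = q"
proof (rule antisym)
  define P :: "'a poly" where "P = monom 1 q - monom 1 1"
  have cP: "coeff P q = 1" using q2 by (simp add: P_def coeff_monom)
  hence P0: "P \<noteq> 0" by auto
  have "degree P \<le> q" unfolding P_def using q2
    by (intro degree_diff_le) (auto simp: degree_monom_eq)
  moreover have "Fq q \<subseteq> {x. poly P x = (0::'a)}"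
    by (auto simp: P_def Fq_def poly_monom)
  hence "card (Fq q :: 'a set) \<le> card {x. poly P x = (0::'a)}"
    by (intro card_mono poly_roots_finite P0)
  ultimately show "card (Fq q :: 'a set) \<le> q"
    using card_poly_roots_bound[OF P0] by linarith
next
  define psi :: "'a poly" where "psi = (\<Sum>j<m. monom 1 (q ^ j))"
  have inj: "q ^ i = q ^ j \<longleftrightarrow> i = j" for i j using q2 by (simp add: power_inject_exp)
  have "coeff psi (q ^ (m - 1)) = (\<Sum>j<m. if j = m - 1 then 1 else 0)"
    unfolding psi_def coeff_sum coeff_monom using inj by (intro sum.cong) auto
  also have "\<dots> = 1" using m1 by simp
  finally have psi0: "psi \<noteq> 0" by auto
  have dpsi: "degree psi \<le> q ^ (m - 1)"
    unfolding psi_def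
  proof (intro degree_sum_le)
    fix j assume "j \<in> {..<m}"
    hence "q ^ j \<le> q ^ (m - 1)" using q2 by (intro power_increasing) auto
    thus "degree (monom (1::'a) (q ^ j)) \<le> q ^ (m - 1)" by (simp add: degree_monom_eq)
  qed auto
  define h :: "'a \<Rightarrow> 'a" where "h x = x ^ q - x" for x
  have hhom: "h (x - y) = h x - h y" for x y
    using frob_diff[of x y 1] by (simp add: h_def)
  have "poly psi (h x) = 0" for x
  proof -
    have "poly psi (h x) = (\<Sum>j<m. (x ^ q - x) ^ (q ^ j))"
      by (simp add: psi_def poly_sum poly_monom h_def)
    also have "\<dots> = (\<Sum>j<m. x ^ (q ^ Suc j) - x ^ (q ^ j))"
      by (intro sum.cong refl) (simp add: frob_diff power_mult[symmetric] mult.commute)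
    also have "\<dots> = x ^ (q ^ m) - x ^ (q ^ 0)" by (rule sum_lessThan_telescope)
    finally show ?thesis using pow_card by simp
  qed
  hence "h ` UNIV \<subseteq> {x. poly psi x = 0}" by auto
  hence "card (h ` UNIV) \<le> card {x. poly psi x = 0}"
    by (intro card_mono poly_roots_finite psi0)
  also have "\<dots> \<le> degree psi" by (rule card_poly_roots_bound[OF psi0])
  also have "\<dots> \<le> q ^ (m - 1)" by (rule dpsi)
  finally have c1: "card (h ` UNIV) \<le> q ^ (m - 1)" .
  have "card (UNIV :: 'a set) \<le> card (h ` UNIV) * card {v\<in>UNIV. h v = 0}"
    by (rule card_ker_img) (auto simp: hhom)
  also have "{v\<in>UNIV. h v = 0} = Fq q" using q2 by (auto simp: h_def Fq_def)
  also have "card (h ` UNIV) * card (Fq q :: 'a set) \<le> q ^ (m - 1) * card (Fq q :: 'a set)"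
    by (rule mult_le_mono1[OF c1])
  finally have "q ^ m \<le> q ^ (m - 1) * card (Fq q :: 'a set)" using card by simp
  moreover have "q ^ m = q ^ (m - 1) * q" using m1
    by (cases m) (auto simp: mult.commute)
  ultimately have "q ^ (m - 1) * q \<le> q ^ (m - 1) * card (Fq q :: 'a set)" by linarith
  moreover have "q ^ (m - 1) > 0" using q2 by simp
  ultimately show "q \<le> card (Fq q :: 'a set)" using q2 by simp
qed

end


context gfq begin

lemma q_inj: "q ^ i = q ^ j \<longleftrightarrow> i = j" using q2 by simp
lemma q_less: "q ^ i < q ^ j \<longleftrightarrow> i < j" using q2 by simp
lemma q_le: "q ^ i \<le> q ^ j \<longleftrightarrow> i \<le> j" using q2 by simp
lemma n_less_qn: "n < q ^ n"
proof (induction n)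
  case (Suc n) thus ?case using q2 by (simp add: less_le_trans[of _ "2 * q ^ n"]) 
qed simp

lemma qlin_iff: "qlin q (f :: 'a poly) \<longleftrightarrow> (\<forall>i. (\<nexists>j. i = q ^ j) \<longrightarrow> coeff f i = 0)"
  unfolding qlin_def by blast
lemma qlin_0 [simp]: "qlin q (0 :: 'a poly)" by (simp add: qlin_def)
lemma qlin_monom [simp]: "qlin q (monom (c::'a) (q ^ s))" by (auto simp: qlin_def)
lemma qlin_add: "qlin q f \<Longrightarrow> qlin q g \<Longrightarrow> qlin q (f + g :: 'a poly)"
  by (auto simp: qlin_iff)
lemma qlin_diff: "qlin q f \<Longrightarrow> qlin q g \<Longrightarrow> qlin q (f - g :: 'a poly)"
  by (auto simp: qlin_iff)
lemma qlin_uminus: "qlin q f \<Longrightarrow> qlin q (- f :: 'a poly)"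
  by (auto simp: qlin_iff)
lemma qlin_smult: "qlin q f \<Longrightarrow> qlin q (smult c f :: 'a poly)"
  by (auto simp: qlin_iff)
lemma qlin_sum: "(\<And>i. i \<in> A \<Longrightarrow> qlin q (f i)) \<Longrightarrow> qlin q (\<Sum>i\<in>A. f i :: 'a poly)"
  by (induction A rule: infinite_finite_induct) (auto intro: qlin_add)

lemma qlin_coeff0: "qlin q (f::'a poly) \<Longrightarrow> coeff f 0 = 0"
  using q2 by (auto simp: qlin_def)

lemma qlin_poly0: "qlin q (f::'a poly) \<Longrightarrow> poly f 0 = 0"
  by (simp add: poly_0_coeff_0 qlin_coeff0)

lemma qexp:
  fixes f :: "'a poly"
  assumes "qlin q f" "degree f < q ^ N"
  shows "f = (\<Sum>s<N. monom (coeff f (q ^ s)) (q ^ s))"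
proof (rule poly_eqI)
  fix j
  have "coeff (\<Sum>s<N. monom (coeff f (q ^ s)) (q ^ s)) j = (\<Sum>s<N. if q ^ s = j then coeff f (q ^ s) else 0)"
    by (simp add: coeff_sum)
  also have "\<dots> = coeff f j"
  proof (cases "\<exists>s. j = q ^ s")
    case True
    then obtain s0 where j: "j = q ^ s0" by auto
    have "(\<Sum>s<N. if q ^ s = j then coeff f (q ^ s) else 0) = (\<Sum>s<N. if s = s0 then coeff f j else 0)"
      by (intro sum.cong) (auto simp: j q_inj)
    also have "\<dots> = coeff f j"
    proof (cases "s0 < N")
      case False
      hence "degree f < j" using assms(2) j q_le[of N s0] by auto
      thus ?thesis using False by (simp add: coeff_eq_0)
    qed simp
    finally show ?thesis .
  next
    case False
    hence "coeff f j = 0" using assms(1) by (auto simp: qlin_def)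
    thus ?thesis using False by (subst sum.neutral) auto
  qed
  finally show "coeff f j = coeff (\<Sum>s<N. monom (coeff f (q ^ s)) (q ^ s)) j" by simp
qed

lemma exN: "\<exists>N. degree (f::'a poly) < q ^ N \<and> degree (g::'a poly) < q ^ N \<and> u < N"
proof -
  let ?N = "degree f + degree g + u + 1"
  have "?N < q ^ ?N" by (rule n_less_qn)
  thus ?thesis by (intro exI[of _ ?N]) auto
qed

lemma pcompose_power: "pcompose (p ^ n) (g :: 'a poly) = (pcompose p g) ^ n"
  by (induction n) (simp_all add: pcompose_mult pcompose_1)

lemma pcompose_monom: "pcompose (monom c n) (g :: 'a poly) = smult c (g ^ n)"
  by (simp add: monom_altdef pcompose_smult pcompose_power pcompose_pCons)

lemma smult_sum_right: "smult c (\<Sum>i\<in>A. f i) = (\<Sum>i\<in>A. smult c (f i :: 'a poly))"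
  by (induction A rule: infinite_finite_induct) (auto simp: smult_add_right)

lemma frob_qexp:
  fixes f :: "'a poly"
  assumes "qlin q f" "degree f < q ^ N"
  shows "f ^ (q ^ s) = (\<Sum>i<N. monom (coeff f (q ^ i) ^ (q ^ s)) (q ^ (i + s)))"
proof -
  have "f ^ (q ^ s) = (\<Sum>i<N. monom (coeff f (q ^ i)) (q ^ i)) ^ (q ^ s)"
    using qexp[OF assms] by simp
  also have "\<dots> = (\<Sum>i<N. monom (coeff f (q ^ i)) (q ^ i) ^ (q ^ s))"
    by (rule frob_sum_poly)
  also have "\<dots> = (\<Sum>i<N. monom (coeff f (q ^ i) ^ (q ^ s)) (q ^ (i + s)))"
    by (simp add: monom_power power_add)
  finally show ?thesis .
qed

lemma pcompose_qexp:
  fixes a b :: "'a poly"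
  assumes "qlin q a" "qlin q b" "degree a < q ^ N" "degree b < q ^ N"
  shows "pcompose a b = (\<Sum>s<N. \<Sum>i<N. monom (coeff a (q ^ s) * coeff b (q ^ i) ^ (q ^ s)) (q ^ (i + s)))"
proof -
  have "pcompose a b = pcompose (\<Sum>s<N. monom (coeff a (q ^ s)) (q ^ s)) b"
    using qexp[OF assms(1,3)] by simp
  also have "\<dots> = (\<Sum>s<N. smult (coeff a (q ^ s)) (b ^ (q ^ s)))"
    by (simp add: pcompose_sum pcompose_monom)
  also have "\<dots> = (\<Sum>s<N. \<Sum>i<N. monom (coeff a (q ^ s) * coeff b (q ^ i) ^ (q ^ s)) (q ^ (i + s)))"
    by (simp add: frob_qexp[OF assms(2,4)] smult_sum_right smult_monom)
  finally show ?thesis .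
qed

lemma qlin_pcompose:
  fixes a b :: "'a poly"
  assumes "qlin q a" "qlin q b"
  shows "qlin q (pcompose a b)"
proof -
  obtain N where N: "degree a < q ^ N" "degree b < q ^ N" using exN by blast
  show ?thesis unfolding pcompose_qexp[OF assms N]
    by (intro qlin_sum) simp
qed

lemma coeff_pcompose_q:
  fixes a b :: "'a poly"
  assumes "qlin q a" "qlin q b"
  shows "coeff (pcompose a b) (q ^ u) = (\<Sum>s\<le>u. coeff a (q ^ s) * coeff b (q ^ (u - s)) ^ (q ^ s))"
proof -
  obtain N where N: "degree a < q ^ N" "degree b < q ^ N" "u < N" using exN by blast
  have "coeff (pcompose a b) (q ^ u) =
     (\<Sum>s<N. \<Sum>i<N. if i + s = u then coeff a (q ^ s) * coeff b (q ^ i) ^ (q ^ s) else 0)"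
    unfolding pcompose_qexp[OF assms N(1,2)] by (simp add: coeff_sum q_inj eq_commute)
  also have "\<dots> = (\<Sum>s<N. if s \<le> u then coeff a (q ^ s) * coeff b (q ^ (u - s)) ^ (q ^ s) else 0)"
  proof (intro sum.cong refl)
    fix s assume "s \<in> {..<N}"
    show "(\<Sum>i<N. if i + s = u then coeff a (q ^ s) * coeff b (q ^ i) ^ (q ^ s) else 0) =
          (if s \<le> u then coeff a (q ^ s) * coeff b (q ^ (u - s)) ^ (q ^ s) else 0)"
    proof (cases "s \<le> u")
      case True
      have "(\<Sum>i<N. if i + s = u then coeff a (q ^ s) * coeff b (q ^ i) ^ (q ^ s) else 0) =
            (\<Sum>i<N. if i = u - s then coeff a (q ^ s) * coeff b (q ^ (u - s)) ^ (q ^ s) else 0)"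
        by (intro sum.cong) (use True in auto)
      also have "\<dots> = coeff a (q ^ s) * coeff b (q ^ (u - s)) ^ (q ^ s)"
        using N(3) by simp
      finally show ?thesis using True by simp
    qed auto
  qed
  also have "\<dots> = (\<Sum>s\<le>u. coeff a (q ^ s) * coeff b (q ^ (u - s)) ^ (q ^ s))"
    using N(3) by (subst sum.inter_filter[symmetric]) (auto intro!: sum.cong)
  finally show ?thesis .
qed

lemma coeff_pcompose_q_nz:
  fixes a b :: "'a poly"
  assumes "qlin q a" "qlin q b" "coeff (pcompose a b) (q ^ u) \<noteq> 0"
  shows "\<exists>s\<le>u. coeff a (q ^ s) \<noteq> 0 \<and> coeff b (q ^ (u - s)) \<noteq> 0"
proof (rule ccontr)
  assume "\<not> ?thesis"
  hence "coeff (pcompose a b) (q ^ u) = 0"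
    unfolding coeff_pcompose_q[OF assms(1,2)] using q2 by (intro sum.neutral) auto
  thus False using assms(3) by simp
qed

lemma qlin_poly_expand:
  fixes f :: "'a poly"
  assumes "qlin q f" "degree f < q ^ N"
  shows "poly f x = (\<Sum>s<N. coeff f (q ^ s) * x ^ (q ^ s))"
  by (subst qexp[OF assms]) (simp add: poly_sum poly_monom)

lemma qlin_poly_add:
  fixes f :: "'a poly"
  assumes "qlin q f" shows "poly f (x + y) = poly f x + poly f y"
proof -
  obtain N where N: "degree f < q ^ N" using exN by blast
  show ?thesis unfolding qlin_poly_expand[OF assms N]
    by (simp add: frob_add distrib_left sum.distrib)
qed

lemma qlin_poly_diff:
  fixes f :: "'a poly"
  assumes "qlin q f" shows "poly f (x - y) = poly f x - poly f y"
  using qlin_poly_add[OF assms, of "x - y" y] by simp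

lemma qlin_poly_uminus:
  fixes f :: "'a poly"
  assumes "qlin q f" shows "poly f (- x) = - poly f x"
  using qlin_poly_diff[OF assms, of 0 x] qlin_poly0[OF assms] by simp

lemma qlin_poly_scale:
  fixes f :: "'a poly"
  assumes "qlin q f" "c \<in> Fq q" shows "poly f (c * x) = c * poly f x"
proof -
  obtain N where N: "degree f < q ^ N" using exN by blast
  show ?thesis unfolding qlin_poly_expand[OF assms(1) N]
    by (simp add: power_mult_distrib Fq_pow[OF assms(2)] sum_distrib_left mult_ac)
qed

lemma qlin_poly_sum:
  fixes f :: "'a poly"
  assumes "qlin q f" shows "poly f (\<Sum>i\<in>A. x i) = (\<Sum>i\<in>A. poly f (x i))"
  by (induction A rule: infinite_finite_induct) (auto simp: qlin_poly0[OF assms] qlin_poly_add[OF assms])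

lemma qlin_poly_lincomb:
  fixes f :: "'a poly"
  assumes "qlin q f" "\<And>i. i \<in> A \<Longrightarrow> c i \<in> Fq q"
  shows "poly f (\<Sum>i\<in>A. c i * x i) = (\<Sum>i\<in>A. c i * poly f (x i))"
  unfolding qlin_poly_sum[OF assms(1)] by (intro sum.cong refl qlin_poly_scale assms)

lemma qlin_degree_le:
  fixes f :: "'a poly"
  assumes "qlin q f" "\<And>i. i > D \<Longrightarrow> coeff f (q ^ i) = 0"
  shows "degree f \<le> q ^ D"
proof (rule degree_le, intro allI impI)
  fix j assume j: "q ^ D < j"
  show "coeff f j = 0"
  proof (cases "\<exists>i. j = q ^ i")
    case True
    then obtain i where "j = q ^ i" by auto
    thus ?thesis using j assms(2) q_less by auto
  qed (use assms(1) in \<open>auto simp: qlin_def\<close>)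
qed

lemma qdeg_facts:
  fixes f :: "'a poly"
  assumes "qlin q f" "f \<noteq> 0"
  shows "coeff f (q ^ qdeg q f) \<noteq> 0" "\<And>i. coeff f (q ^ i) \<noteq> 0 \<Longrightarrow> i \<le> qdeg q f"
    "degree f = q ^ qdeg q f"
proof -
  let ?S = "{i. coeff f (q ^ i) \<noteq> 0}"
  have fin: "finite ?S"
  proof (rule finite_subset[of _ "{..degree f}"])
    show "?S \<subseteq> {..degree f}"
    proof
      fix i assume "i \<in> ?S"
      hence "q ^ i \<le> degree f" by (auto intro: le_degree)
      thus "i \<in> {..degree f}" using n_less_qn[of i] by auto
    qed
  qed auto
  have "coeff f (degree f) \<noteq> 0" using assms(2) by simp
  with assms(1) obtain d0 where d0: "degree f = q ^ d0" unfolding qlin_def by blast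
  have ne: "d0 \<in> ?S" using \<open>coeff f (degree f) \<noteq> 0\<close> d0 by simp
  show m: "coeff f (q ^ qdeg q f) \<noteq> 0"
    unfolding qdeg_def using Max_in[OF fin] ne by blast
  show le: "\<And>i. coeff f (q ^ i) \<noteq> 0 \<Longrightarrow> i \<le> qdeg q f"
    unfolding qdeg_def using Max_ge[OF fin] by blast
  have "q ^ qdeg q f \<le> degree f" using m by (rule le_degree)
  moreover have "d0 \<le> qdeg q f" using le ne by blast
  ultimately show "degree f = q ^ qdeg q f" using d0 q_le by (metis antisym)
qed

lemma qdeg_le:
  fixes f :: "'a poly"
  assumes "qlin q f" "f \<noteq> 0" "\<And>i. i > D \<Longrightarrow> coeff f (q ^ i) = 0"
  shows "qdeg q f \<le> D"
  using qdeg_facts(1)[OF assms(1,2)] assms(3) by (meson not_le)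

lemma monom_1_1: "monom 1 1 = [:0, 1:]"
  by (simp add: monom_Suc monom_0)

lemma pcompose_x: "pcompose (p::'a poly) (monom 1 1) = p"
  unfolding monom_1_1 by simp

lemma qlin_pcompose_0: "qlin q (p::'a poly) \<Longrightarrow> pcompose p 0 = 0"
  by (simp add: pcompose_0' qlin_coeff0)

end


definition fspan :: "nat \<Rightarrow> nat set \<Rightarrow> (nat \<Rightarrow> 'a::field) \<Rightarrow> 'a set" where
  "fspan q I v = {\<Sum>i\<in>I. c i * v i | c. \<forall>i\<in>I. c i \<in> Fq q}"

definition SP :: "nat \<Rightarrow> nat set \<Rightarrow> (nat \<Rightarrow> 'a::field) \<Rightarrow> 'a poly" where
  "SP q I v = (\<Prod>u\<in>fspan q I v. [:-u, 1:])"

lemma fq_span_fspan: "fq_span q n g = fspan q {..<n} g"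
  unfolding fq_span_def fspan_def by auto

lemma Pi_g_SP: "Pi_g q n g = SP q {..<n} g"
  by (simp add: Pi_g_def SP_def fq_span_fspan)

context gfq begin

lemma fspan_0: "(0::'a) \<in> fspan q I v"
proof -
  have "(0::'a) = (\<Sum>i\<in>I. 0 * v i)" by simp
  moreover have "\<forall>i\<in>I. (0::'a) \<in> Fq q" by simp
  ultimately show ?thesis unfolding fspan_def by (intro CollectI exI[of _ "\<lambda>i. 0"]) auto
qed

lemma fspan_add:
  assumes "x \<in> fspan q I v" "y \<in> fspan q I v" shows "x + y \<in> fspan q I (v::nat \<Rightarrow> 'a)"
proof -
  obtain c where c: "\<forall>i\<in>I. c i \<in> Fq q" "x = (\<Sum>i\<in>I. c i * v i)" using assms(1) by (auto simp: fspan_def)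
  obtain d where d: "\<forall>i\<in>I. d i \<in> Fq q" "y = (\<Sum>i\<in>I. d i * v i)" using assms(2) by (auto simp: fspan_def)
  have "x + y = (\<Sum>i\<in>I. (c i + d i) * v i)" using c(2) d(2) by (simp add: sum.distrib distrib_right)
  moreover have "\<forall>i\<in>I. c i + d i \<in> Fq q" using c(1) d(1) by (simp add: Fq_add)
  ultimately show ?thesis unfolding fspan_def by (intro CollectI exI[of _ "\<lambda>i. c i + d i"]) auto
qed

lemma fspan_scale:
  assumes "x \<in> fspan q I v" "a \<in> Fq q" shows "a * x \<in> fspan q I (v::nat \<Rightarrow> 'a)"
proof -
  obtain c where c: "\<forall>i\<in>I. c i \<in> Fq q" "x = (\<Sum>i\<in>I. c i * v i)" using assms(1) by (auto simp: fspan_def)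
  have "a * x = (\<Sum>i\<in>I. (a * c i) * v i)" using c(2) by (simp add: sum_distrib_left mult.assoc)
  moreover have "\<forall>i\<in>I. a * c i \<in> Fq q" using c(1) assms(2) by (simp add: Fq_mult)
  ultimately show ?thesis unfolding fspan_def by (intro CollectI exI[of _ "\<lambda>i. a * c i"]) auto
qed

lemma fspan_uminus:
  assumes "x \<in> fspan q I v" shows "- x \<in> fspan q I (v::nat \<Rightarrow> 'a)"
proof -
  have "(- 1) * x \<in> fspan q I v" by (rule fspan_scale[OF assms Fq_uminus[OF Fq_1]])
  thus ?thesis by simp
qed

lemma fspan_diff:
  assumes "x \<in> fspan q I v" "y \<in> fspan q I v" shows "x - y \<in> fspan q I (v::nat \<Rightarrow> 'a)"
proof -
  have "x + (- y) \<in> fspan q I v" by (rule fspan_add[OF assms(1) fspan_uminus[OF assms(2)]])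
  thus ?thesis by simp
qed

lemma fspan_elem: "v j \<in> fspan q I (v::nat \<Rightarrow> 'a)" if "finite I" "j \<in> I"
proof -
  have "(\<Sum>i\<in>I. (if i = j then 1 else 0) * v i) = (\<Sum>i\<in>I. if i = j then v i else 0)"
    by (rule sum.cong) auto
  also have "\<dots> = v j" using that by (simp add: sum.delta')
  finally show ?thesis unfolding fspan_def
    by (intro CollectI exI[of _ "\<lambda>i. if i = j then 1 else 0"]) auto
qed

lemma fspan_sum: "(\<And>i. i \<in> J \<Longrightarrow> x i \<in> fspan q I v) \<Longrightarrow> (\<Sum>i\<in>J. x i) \<in> fspan q I (v::nat \<Rightarrow> 'a)"
  by (induction J rule: infinite_finite_induct) (auto intro: fspan_add fspan_0)

lemma fspan_lincomb: "(\<And>i. i \<in> J \<Longrightarrow> x i \<in> fspan q I v) \<Longrightarrow> (\<And>i. i \<in> J \<Longrightarrow> c i \<in> Fq q)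
   \<Longrightarrow> (\<Sum>i\<in>J. c i * x i) \<in> fspan q I (v::nat \<Rightarrow> 'a)"
  by (intro fspan_sum fspan_scale) auto

lemma fspan_image:
  assumes "finite I"
  shows "fspan q I v = (\<lambda>c. \<Sum>i\<in>I. c i * v i) ` (PiE I (\<lambda>_. Fq q :: 'a set))"
proof
  show "fspan q I v \<subseteq> (\<lambda>c. \<Sum>i\<in>I. c i * v i) ` (PiE I (\<lambda>_. Fq q))"
  proof
    fix x assume "x \<in> fspan q I v"
    then obtain c where c: "\<forall>i\<in>I. c i \<in> Fq q" "x = (\<Sum>i\<in>I. c i * v i)" by (auto simp: fspan_def)
    have "restrict c I \<in> PiE I (\<lambda>_. Fq q)" using c(1) by auto
    moreover have "x = (\<Sum>i\<in>I. restrict c I i * v i)" using c(2) by simp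
    ultimately show "x \<in> (\<lambda>c. \<Sum>i\<in>I. c i * v i) ` (PiE I (\<lambda>_. Fq q))" by blast
  qed
qed (auto simp: fspan_def PiE_def Pi_def)

lemma card_fspan_le:
  assumes "finite I"
  shows "card (fspan q I (v::nat \<Rightarrow> 'a)) \<le> q ^ card I"
proof -
  have "card (fspan q I v) \<le> card (PiE I (\<lambda>_. Fq q :: 'a set))"
    unfolding fspan_image[OF assms] by (rule card_image_le) (simp add: assms finite_PiE)
  also have "\<dots> = q ^ card I" using assms by (simp add: card_PiE card_Fq)
  finally show ?thesis .
qed

lemma card_fspan_eq:
  assumes "finite I" "fq_indep q v I"
  shows "card (fspan q I (v::nat \<Rightarrow> 'a)) = q ^ card I"
proof -
  have "inj_on (\<lambda>c. \<Sum>i\<in>I. c i * v i) (PiE I (\<lambda>_. Fq q :: 'a set))"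
  proof (rule inj_onI)
    fix c c' assume c: "c \<in> PiE I (\<lambda>_. Fq q)" and c': "c' \<in> PiE I (\<lambda>_. Fq q)"
      and eq: "(\<Sum>i\<in>I. c i * v i) = (\<Sum>i\<in>I. c' i * v i)"
    have "(\<Sum>i\<in>I. (c i - c' i) * v i) = 0"
      using eq by (simp add: algebra_simps sum_subtractf)
    moreover have "\<forall>i\<in>I. c i - c' i \<in> Fq q" using c c' by (auto intro: Fq_diff)
    ultimately have "\<forall>i\<in>I. c i - c' i = 0"
      using assms(2)[unfolded fq_indep_def, rule_format, of "\<lambda>i. c i - c' i"] by blast
    thus "c = c'" using c c' by (intro PiE_ext) auto
  qed
  hence "card (fspan q I v) = card (PiE I (\<lambda>_. Fq q :: 'a set))"
    unfolding fspan_image[OF assms(1)] by (rule card_image)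
  also have "\<dots> = q ^ card I" using assms by (simp add: card_PiE card_Fq)
  finally show ?thesis .
qed

lemma indep_insertD:
  assumes "finite I" "j \<notin> I" "fq_indep q (v::nat \<Rightarrow> 'a) (insert j I)"
  shows "fq_indep q v I" "v j \<notin> fspan q I v"
proof -
  show "fq_indep q v I" unfolding fq_indep_def
  proof (intro allI impI)
    fix c assume c: "(\<forall>i\<in>I. c i \<in> Fq q) \<and> (\<Sum>i\<in>I. c i * v i) = 0"
    let ?c = "c(j := 0)"
    have "(\<Sum>i\<in>insert j I. ?c i * v i) = (\<Sum>i\<in>I. c i * v i)"
      using assms(1,2) by (simp add: sum.insert) (intro sum.cong, auto)
    moreover have "\<forall>i\<in>insert j I. ?c i \<in> Fq q" using c by auto
    ultimately have "\<forall>i\<in>insert j I. ?c i = 0" using c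
      assms(3)[unfolded fq_indep_def, rule_format, of ?c] by auto
    thus "\<forall>i\<in>I. c i = 0" using assms(2) by (auto split: if_splits)
  qed
  show "v j \<notin> fspan q I v"
  proof
    assume "v j \<in> fspan q I v"
    then obtain c where c: "\<forall>i\<in>I. c i \<in> Fq q" "v j = (\<Sum>i\<in>I. c i * v i)" by (auto simp: fspan_def)
    let ?c = "c(j := -1)"
    have "(\<Sum>i\<in>insert j I. ?c i * v i) = - v j + (\<Sum>i\<in>I. c i * v i)"
      using assms(1,2) by (simp add: sum.insert) (intro sum.cong, auto)
    also have "\<dots> = 0" using c(2) by simp
    moreover have "\<forall>i\<in>insert j I. ?c i \<in> Fq q" using c(1) Fq_uminus[OF Fq_1] by auto
    ultimately have "\<forall>i\<in>insert j I. ?c i = 0"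
      using assms(3)[unfolded fq_indep_def, rule_format, of ?c] by auto
    thus False by simp
  qed
qed

lemma fspan_insert:
  assumes "finite I" "j \<notin> I"
  shows "fspan q (insert j I) v = (\<lambda>(c, u). u + c * v j) ` (Fq q \<times> fspan q I (v::nat \<Rightarrow> 'a))"
proof
  show "fspan q (insert j I) v \<subseteq> (\<lambda>(c, u). u + c * v j) ` (Fq q \<times> fspan q I v)"
  proof
    fix x assume "x \<in> fspan q (insert j I) v"
    then obtain c where c: "\<forall>i\<in>insert j I. c i \<in> Fq q" "x = (\<Sum>i\<in>insert j I. c i * v i)"
      by (auto simp: fspan_def)
    have "x = (\<Sum>i\<in>I. c i * v i) + c j * v j" using c(2) assms by (simp add: sum.insert)
    moreover have "(\<Sum>i\<in>I. c i * v i) \<in> fspan q I v" using c(1) by (auto simp: fspan_def)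
    ultimately show "x \<in> (\<lambda>(c, u). u + c * v j) ` (Fq q \<times> fspan q I v)"
      using c(1) by (intro image_eqI[of _ _ "(c j, \<Sum>i\<in>I. c i * v i)"]) auto
  qed
next
  show "(\<lambda>(c, u). u + c * v j) ` (Fq q \<times> fspan q I v) \<subseteq> fspan q (insert j I) v"
  proof clarify
    fix a :: 'a and u assume a: "a \<in> Fq q" and u: "u \<in> fspan q I v"
    have "v j \<in> fspan q (insert j I) v" using assms by (intro fspan_elem) auto
    moreover have "u \<in> fspan q (insert j I) v"
    proof -
      obtain c where c: "\<forall>i\<in>I. c i \<in> Fq q" "u = (\<Sum>i\<in>I. c i * v i)" using u by (auto simp: fspan_def)
      let ?c = "c(j := 0)"
      have "u = (\<Sum>i\<in>insert j I. ?c i * v i)"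
        using assms c(2) by (simp add: sum.insert) (intro sum.cong, auto)
      moreover have "\<forall>i\<in>insert j I. ?c i \<in> Fq q" using c(1) by auto
      ultimately show ?thesis unfolding fspan_def by blast
    qed
    ultimately show "u + a * v j \<in> fspan q (insert j I) v"
      by (intro fspan_add fspan_scale a)
  qed
qed

end


context gfq begin

lemma const_poly_sum: "(\<Sum>i\<in>A. [:f i:]) = [:\<Sum>i\<in>A. f i :: 'a:]"
  by (induction A rule: infinite_finite_induct) auto

lemma pcompose_shift:
  fixes P :: "'a poly"
  assumes "qlin q P"
  shows "pcompose P [:b, 1:] = P + [:poly P b:]"
proof -
  obtain N where N: "degree P < q ^ N" using exN by blast
  have pw: "[:b, 1:] ^ (q ^ s) = monom 1 (q ^ s) + [:b ^ (q ^ s):]" for s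
  proof -
    have "[:b, 1:] = monom 1 1 + [:b:]" unfolding monom_1_1 by simp
    hence "[:b, 1:] ^ (q ^ s) = (monom 1 1) ^ (q ^ s) + [:b:] ^ (q ^ s)" by (simp only: frob_add_poly)
    thus ?thesis by (simp add: monom_power poly_const_pow)
  qed
  have "pcompose P [:b, 1:] = (\<Sum>s<N. smult (coeff P (q ^ s)) ([:b, 1:] ^ (q ^ s)))"
    by (subst qexp[OF assms N]) (simp add: pcompose_sum pcompose_monom)
  also have "\<dots> = (\<Sum>s<N. monom (coeff P (q ^ s)) (q ^ s) + [:coeff P (q ^ s) * b ^ (q ^ s):])"
    by (intro sum.cong refl) (simp add: pw smult_add_right smult_monom)
  also have "\<dots> = (\<Sum>s<N. monom (coeff P (q ^ s)) (q ^ s)) + [:\<Sum>s<N. coeff P (q ^ s) * b ^ (q ^ s):]"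
    by (simp add: sum.distrib const_poly_sum)
  also have "\<dots> = P + [:poly P b:]"
    using qexp[OF assms N] qlin_poly_expand[OF assms N] by simp
  finally show ?thesis .
qed

lemma subspace_factor:
  fixes a :: 'a
  assumes "a \<noteq> 0"
  shows "(\<Prod>c\<in>Fq q. [:- (c * a), 1:]) = monom 1 q - monom (a ^ (q - 1)) 1"
proof (rule poly_eqI_degree_lead_coeff[of _ q _ "(\<lambda>c. c * a) ` Fq q"])
  have nz: "\<forall>c\<in>Fq q. [:- (c * a), 1:] \<noteq> 0" by auto
  have deg: "degree (\<Prod>c\<in>Fq q. [:- (c * a), 1:]) = q"
  proof -
    have "degree (\<Prod>c\<in>Fq q. [:- (c * a), 1:]) = (\<Sum>c\<in>Fq q. degree [:- (c * a), 1:])"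
      by (rule degree_prod_eq_sum_degree[OF nz])
    also have "\<dots> = (\<Sum>c\<in>(Fq q :: 'a set). (1::nat))" by simp
    also have "\<dots> = q" using card_Fq by simp
    finally show ?thesis .
  qed
  show "degree (\<Prod>c\<in>Fq q. [:- (c * a), 1:]) \<le> q" using deg by simp
  have "coeff (\<Prod>c\<in>Fq q. [:- (c * a), 1:]) q = lead_coeff (\<Prod>c\<in>Fq q. [:- (c * a), 1:])"
    using deg by simp
  also have "\<dots> = 1" by (simp add: lead_coeff_prod)
  also have "1 = coeff (monom 1 q - monom (a ^ (q - 1)) 1) q" using q2 by simp
  finally show "coeff (\<Prod>c\<in>Fq q. [:- (c * a), 1:]) q = coeff (monom 1 q - monom (a ^ (q - 1)) 1) q" .
  have "degree (monom (1::'a) q) \<le> q" by (rule degree_monom_le)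
  moreover have "degree (monom (a ^ (q - 1)) 1) \<le> q" using q2 by (intro order_trans[OF degree_monom_le]) auto
  ultimately show "degree (monom 1 q - monom (a ^ (q - 1)) 1) \<le> q" by (rule degree_diff_le)
  have "inj_on (\<lambda>c. c * a) (Fq q)" using assms by (auto simp: inj_on_def)
  thus "q \<le> card ((\<lambda>c. c * a) ` Fq q)" by (simp add: card_image card_Fq)
  fix z assume "z \<in> (\<lambda>c. c * a) ` Fq q"
  then obtain c where c: "c \<in> Fq q" "z = c * a" by auto
  have "poly (\<Prod>c\<in>Fq q. [:- (c * a), 1:]) z = 0"
    using c by (auto simp: poly_prod intro!: prod_zero)
  moreover have "poly (monom 1 q - monom (a ^ (q - 1)) 1) z = 0"
  proof -
    obtain q' where q': "q = Suc q'" using q2 by (cases q) auto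
    have "poly (monom 1 q - monom (a ^ (q - 1)) 1) z = (c * a) ^ q - a ^ q' * (c * a)"
      by (simp add: poly_monom c(2) q')
    also have "\<dots> = c ^ q * a ^ q - c * a ^ q" by (simp add: power_mult_distrib q' mult_ac)
    also have "c ^ q = c" using c(1) by (simp add: Fq_iff)
    finally show ?thesis by simp
  qed
  ultimately show "poly (\<Prod>c\<in>Fq q. [:- (c * a), 1:]) z = poly (monom 1 q - monom (a ^ (q - 1)) 1) z"
    by simp
qed

lemma SP_props:
  assumes "finite I" "fq_indep q (v::nat \<Rightarrow> 'a) I"
  shows "qlin q (SP q I v) \<and> coeff (SP q I v) (q ^ card I) = 1 \<and> degree (SP q I v) = q ^ card I"
  using assms
proof (induction I rule: finite_induct)
  case empty
  have "fspan q {} v = {0}" by (auto simp: fspan_def)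
  hence "SP q {} v = monom 1 (q ^ 0)" by (simp add: SP_def monom_Suc monom_0)
  thus ?case using qlin_monom[of 1 0] by (simp add: degree_monom_eq)
next
  case (insert j I)
  note ind = indep_insertD[OF insert(1,2,4)]
  have IH: "qlin q (SP q I v)" "coeff (SP q I v) (q ^ card I) = 1" "degree (SP q I v) = q ^ card I"
    using insert(3)[OF ind(1)] by auto
  define P where "P = SP q I v"
  define S where "S = fspan q I v"
  define a where "a = poly P (v j)"
  have a0: "a \<noteq> 0"
    using ind(2) by (auto simp: a_def P_def SP_def S_def poly_prod)
  have inj: "inj_on (\<lambda>(c, u). u + c * v j) (Fq q \<times> S)"
  proof (rule inj_onI, clarify)
    fix c u c' u' assume c: "c \<in> Fq q" "u \<in> S" "c' \<in> Fq q" "u' \<in> S" "u + c * v j = u' + c' * v j"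
    show "c = c' \<and> u = u'"
    proof (cases "c = c'")
      case False
      have "(c - c') * v j = u' - u" using c(5) by (simp add: algebra_simps)
      hence "v j = inverse (c - c') * (u' - u)" using False by (simp add: field_simps)
      moreover have "inverse (c - c') * (u' - u) \<in> S"
        unfolding S_def by (intro fspan_scale fspan_diff Fq_inverse Fq_diff) (use c in \<open>auto simp: S_def\<close>)
      ultimately show ?thesis using ind(2) by (simp add: S_def)
    qed (use c in auto)
  qed
  have "SP q (insert j I) v = (\<Prod>x\<in>(\<lambda>(c, u). u + c * v j) ` (Fq q \<times> S). [:- x, 1:])"
    by (simp add: SP_def fspan_insert[OF insert(1,2)] S_def)
  also have "\<dots> = (\<Prod>(c, u)\<in>Fq q \<times> S. [:- (u + c * v j), 1:])"
    by (subst prod.reindex[OF inj]) (simp add: case_prod_beta')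
  also have "\<dots> = (\<Prod>c\<in>Fq q. \<Prod>u\<in>S. [:- (u + c * v j), 1:])"
    by (rule prod.cartesian_product[symmetric])
  also have "\<dots> = (\<Prod>c\<in>Fq q. pcompose P [:- (c * v j), 1:])"
  proof (intro prod.cong refl)
    fix c
    show "(\<Prod>u\<in>S. [:- (u + c * v j), 1:]) = pcompose P [:- (c * v j), 1:]"
      by (simp add: P_def SP_def S_def pcompose_prod pcompose_pCons algebra_simps)
  qed
  also have "\<dots> = (\<Prod>c\<in>Fq q. pcompose [:- (c * a), 1:] P)"
  proof (intro prod.cong refl)
    fix c :: 'a assume c: "c \<in> Fq q"
    have "pcompose P [:- (c * v j), 1:] = P + [:poly P (- (c * v j)):]"
      by (rule pcompose_shift) (simp add: IH P_def)
    also have "poly P (- (c * v j)) = - (c * a)"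
      using IH(1) c unfolding P_def a_def
      by (simp add: qlin_poly_uminus qlin_poly_scale)
    finally show "pcompose P [:- (c * v j), 1:] = pcompose [:- (c * a), 1:] P"
      by (simp add: pcompose_pCons algebra_simps)
  qed
  also have "\<dots> = pcompose (\<Prod>c\<in>Fq q. [:- (c * a), 1:]) P"
    by (simp add: pcompose_prod)
  also have "\<dots> = P ^ q - smult (a ^ (q - 1)) P"
    by (simp add: subspace_factor[OF a0] pcompose_diff pcompose_monom)
  finally have eq: "SP q (insert j I) v = P ^ q - smult (a ^ (q - 1)) P" .
  have P0: "P \<noteq> 0" using IH by (auto simp: P_def)
  have card: "card (insert j I) = Suc (card I)" using insert by simp
  obtain N where N: "degree P < q ^ N" using exN by blast
  have e: "P ^ (q ^ 1) = (\<Sum>i<N. monom (coeff P (q ^ i) ^ (q ^ 1)) (q ^ (i + 1)))"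
    by (rule frob_qexp[OF IH(1)[folded P_def] N])
  have "qlin q (P ^ (q ^ 1))" unfolding e by (intro qlin_sum qlin_monom)
  hence "qlin q (P ^ q)" by (simp only: power_one_right)
  hence ql: "qlin q (SP q (insert j I) v)" unfolding eq
    by (intro qlin_diff qlin_smult) (simp_all add: IH P_def)
  have dPq: "degree (P ^ q) = q ^ Suc (card I)"
  proof -
    have "degree (P ^ q) = q * degree P" by (rule degree_power_eq[OF P0])
    thus ?thesis using IH(3) by (simp add: P_def)
  qed
  have dlt: "degree (smult (a ^ (q - 1)) P) < degree (P ^ q)"
  proof -
    have "degree (smult (a ^ (q - 1)) P) \<le> degree P" by (rule degree_smult_le)
    also have "degree P = q ^ card I" using IH(3) by (simp add: P_def)
    also have "\<dots> < q ^ Suc (card I)" using q_less[of "card I" "Suc (card I)"] by simp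
    finally show ?thesis using dPq by simp
  qed
  have eq2: "SP q (insert j I) v = P ^ q + (- smult (a ^ (q - 1)) P)" using eq by simp
  have deg: "degree (SP q (insert j I) v) = q ^ Suc (card I)"
  proof -
    have "degree (P ^ q + (- smult (a ^ (q - 1)) P)) = degree (P ^ q)"
      by (rule degree_add_eq_left) (simp only: degree_minus dlt)
    thus ?thesis using eq2 dPq by simp
  qed
  have "coeff (SP q (insert j I) v) (q ^ Suc (card I)) =
        coeff (P ^ q) (q ^ Suc (card I)) - coeff (smult (a ^ (q - 1)) P) (q ^ Suc (card I))"
    unfolding eq by (rule coeff_diff)
  also have "coeff (smult (a ^ (q - 1)) P) (q ^ Suc (card I)) = 0"
    by (rule coeff_eq_0) (use dlt dPq in simp)
  also have "coeff (P ^ q) (q ^ Suc (card I)) = lead_coeff (P ^ q)" using dPq by simp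
  also have "lead_coeff (P ^ q) = 1" using IH(2,3) by (simp add: lead_coeff_power P_def)
  finally show ?case using ql deg card by simp
qed

end


context gfq begin

lemma moore_det_nonzero:
  assumes n1: "n \<ge> 1" and ind: "fq_indep q (g::nat \<Rightarrow> 'a) {..<n}"
  shows "det (Mmat q n g) \<noteq> 0"
proof
  assume d0: "det (Mmat q n g) = 0"
  let ?M = "Mmat q n g"
  have M: "?M \<in> carrier_mat n n" by (simp add: Mmat_def)
  have "det (transpose_mat ?M) = 0" using d0 det_transpose[OF M] by simp
  then obtain w where w: "w \<in> carrier_vec n" "w \<noteq> 0\<^sub>v n" "transpose_mat ?M *\<^sub>v w = 0\<^sub>v n"
    using det_0_iff_vec_prod_zero[of "transpose_mat ?M" n] M by auto
  define A :: "'a poly" where "A = (\<Sum>j<n. monom (w $ j) (q ^ j))"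
  have qA: "qlin q A" unfolding A_def by (intro qlin_sum) simp
  have cA: "coeff A (q ^ j) = (if j < n then w $ j else 0)" for j
  proof -
    have "coeff A (q ^ j) = (\<Sum>j'<n. if j' = j then w $ j' else 0)"
      unfolding A_def coeff_sum by (intro sum.cong refl) (simp add: q_inj)
    thus ?thesis by simp
  qed
  have Ag: "poly A (g l) = 0" if "l < n" for l
  proof -
    have "(transpose_mat ?M *\<^sub>v w) $ l = 0" using w(3) that by simp
    moreover have "(transpose_mat ?M *\<^sub>v w) $ l = (\<Sum>j<n. g l ^ (q ^ j) * w $ j)"
      using that w(1) M by (simp add: scalar_prod_def Mmat_def atLeast0LessThan)
    moreover have "poly A (g l) = (\<Sum>j<n. w $ j * g l ^ (q ^ j))"
      by (simp add: A_def poly_sum poly_monom)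
    ultimately show ?thesis by (simp add: mult.commute)
  qed
  have "A = 0"
  proof (rule ccontr)
    assume A0: "A \<noteq> 0"
    have "fspan q {..<n} g \<subseteq> {x. poly A x = 0}"
    proof
      fix x assume "x \<in> fspan q {..<n} g"
      then obtain c where c: "\<forall>i\<in>{..<n}. c i \<in> Fq q" "x = (\<Sum>i<n. c i * g i)"
        by (auto simp: fspan_def)
      have "poly A x = (\<Sum>i<n. c i * poly A (g i))"
        unfolding c(2) using c(1) by (intro qlin_poly_lincomb[OF qA]) auto
      thus "x \<in> {x. poly A x = 0}" by (simp add: Ag)
    qed
    hence "card (fspan q {..<n} g) \<le> card {x. poly A x = 0}"
      by (intro card_mono poly_roots_finite A0)
    also have "\<dots> \<le> degree A" by (rule card_poly_roots_bound[OF A0])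
    also have "degree A \<le> q ^ (n - 1)"
      by (rule qlin_degree_le[OF qA]) (simp add: cA)
    also have "\<dots> < q ^ n" using n1 q_less by simp
    finally show False using card_fspan_eq[OF _ ind] by simp
  qed
  hence "w = 0\<^sub>v n"
    using w(1) cA by (intro eq_vecI) (auto, metis coeff_0)
  thus False using w(2) by simp
qed

lemma eval_det:
  fixes D :: "'a poly mat"
  shows "poly (det D) a = det (map_mat (\<lambda>p. poly p a) D)"
proof -
  interpret ev: comm_ring_hom "\<lambda>p. poly p a" by unfold_locales auto
  show ?thesis by simp
qed

lemma const_det:
  fixes B :: "'a mat"
  shows "det (map_mat (\<lambda>x. [:x:]) B) = [:det B:]"
proof -
  interpret cst: comm_ring_hom "\<lambda>x::'a. [:x:]" by unfold_locales auto
  show ?thesis by simp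
qed

lemma Dmat_eval:
  fixes g :: "nat \<Rightarrow> 'a"
  assumes "i < n"
  shows "map_mat (\<lambda>p. poly p x) (Dmat q n g i) =
     mat n n (\<lambda>(r, l). (if (if l < i then l else Suc l) < n then g (if l < i then l else Suc l) else x) ^ (q ^ r))"
  by (rule eq_matI) (auto simp: Dmat_def Mext_def poly_monom)

lemma Dmat_eval_g:
  fixes g :: "nat \<Rightarrow> 'a"
  assumes n1: "n \<ge> 1" and i: "i < n" and j: "j < n"
  shows "poly (det (Dmat q n g i)) (g j) = (if i = j then (-1) ^ (n - 1 - i) * det (Mmat q n g) else 0)"
proof -
  let ?E = "mat n n (\<lambda>(r, l). (if (if l < i then l else Suc l) < n then g (if l < i then l else Suc l) else g j) ^ (q ^ r))"
  have E: "?E \<in> carrier_mat n n" by simp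
  have "poly (det (Dmat q n g i)) (g j) = det ?E"
    by (subst eval_det) (simp only: Dmat_eval[OF i])
  also have "\<dots> = (if i = j then (-1) ^ (n - 1 - i) * det (Mmat q n g) else 0)"
  proof (cases "i = j")
    case False
    define l1 where "l1 = (if j < i then j else j - 1)"
    have l1: "l1 < n - 1" "l1 \<noteq> n - 1" using i j False by (auto simp: l1_def)
    have "col ?E l1 = col ?E (n - 1)"
      using l1 i j False by (intro eq_vecI) (auto simp: l1_def)
    hence "det ?E = 0"
      by (intro det_identical_columns[OF E, of l1 "n - 1"]) (use l1 n1 in auto)
    thus ?thesis using False by simp
  next
    case True
    have M: "Mmat q n g \<in> carrier_mat n n" by (simp add: Mmat_def)
    have "det (Mmat q n g) = (- 1) ^ (1 * (n - 1 - i)) *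
      det (mat n n (\<lambda>(r, c). Mmat q n g $$ (r, if c < i then c else if c < i + (n - 1 - i) then c + 1 else c - (n - 1 - i))))"
      by (rule det_swap_final_cols[OF M]) (use i in simp)
    also have "mat n n (\<lambda>(r, c). Mmat q n g $$ (r, if c < i then c else if c < i + (n - 1 - i) then c + 1 else c - (n - 1 - i))) = ?E"
    proof (rule eq_matI)
      fix r c assume r: "r < dim_row ?E" and c: "c < dim_col ?E"
      hence r': "r < n" and c': "c < n" by auto
      consider "c < i" | "i \<le> c" "c < n - 1" | "c = n - 1" using c' by linarith
      thus "mat n n (\<lambda>(r, c). Mmat q n g $$ (r, if c < i then c else if c < i + (n - 1 - i) then c + 1 else c - (n - 1 - i))) $$ (r, c) = ?E $$ (r, c)"
      proof cases
        case 1 thus ?thesis using r' c' i by (simp add: Mmat_def)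
      next
        case 2
        hence "\<not> c < i" "c < i + (n - 1 - i)" "Suc c < n" by auto
        thus ?thesis using r' c' i by (simp add: Mmat_def)
      next
        case 3
        hence "\<not> c < i" "\<not> c < i + (n - 1 - i)" "\<not> Suc c < n" "c - (n - 1 - i) = i" using i by auto
        thus ?thesis using r' c' i True by (simp add: Mmat_def)
      qed
    qed auto
    finally have "det (Mmat q n g) = (-1) ^ (n - 1 - i) * det ?E" by simp
    hence "(-1) ^ (n - 1 - i) * det (Mmat q n g) = ((-1) ^ (n - 1 - i) * (-1) ^ (n - 1 - i)) * det ?E"
      by (simp add: mult.assoc)
    also have "(-1::'a) ^ (n - 1 - i) * (-1) ^ (n - 1 - i) = 1"
      by (simp flip: power_add add: power_mult[symmetric] mult_2[symmetric])
    finally show ?thesis using True by simp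
  qed
  finally show ?thesis .
qed

lemma Lambda_interp:
  assumes n1: "n \<ge> 1" and ind: "fq_indep q (g::nat \<Rightarrow> 'a) {..<n}" and j: "j < n"
  shows "poly (Lambda q n g r) (g j) = r j"
proof -
  have d: "det (Mmat q n g) \<noteq> 0" by (rule moore_det_nonzero[OF n1 ind])
  have "poly (Lambda q n g r) (g j) = inverse (det (Mmat q n g)) *
     (\<Sum>i<n. (-1) ^ (n - 1 - i) * r i * (if i = j then (-1) ^ (n - 1 - i) * det (Mmat q n g) else 0))"
    by (simp add: Lambda_def poly_sum Dmat_eval_g[OF n1 _ j])
  also have "\<dots> = inverse (det (Mmat q n g)) * ((-1) ^ (n - 1 - j) * r j * ((-1) ^ (n - 1 - j) * det (Mmat q n g)))"
    using j by (simp add: if_distrib[of "\<lambda>x. _ * x"] sum.delta' cong: if_cong)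
  also have "(-1::'a) ^ (n - 1 - j) * (-1) ^ (n - 1 - j) = 1"
    by (simp flip: power_add add: power_mult[symmetric] mult_2[symmetric])
  hence "inverse (det (Mmat q n g)) * ((-1) ^ (n - 1 - j) * r j * ((-1) ^ (n - 1 - j) * det (Mmat q n g))) = r j"
    using d by (simp add: field_simps)
  finally show ?thesis .
qed

lemma neg1_pow_poly: "((-1::'a poly) ^ k) * p = smult ((-1) ^ k) p"
  by (induction k) auto

lemma qlin_det_Dmat:
  assumes n1: "n \<ge> 1" and i: "i < n"
  shows "qlin q (det (Dmat q n (g::nat \<Rightarrow> 'a) i))"
proof -
  let ?D = "Dmat q n g i"
  have D: "?D \<in> carrier_mat n n" by (simp add: Dmat_def)
  have "det ?D = (\<Sum>r<n. ?D $$ (r, n - 1) * cofactor ?D r (n - 1))"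
    by (rule laplace_expansion_column[OF D]) (use n1 in simp)
  also have "\<dots> = (\<Sum>r<n. smult ((-1) ^ (r + (n - 1)) * det (map_mat (\<lambda>p. coeff p 0) (mat_delete ?D r (n - 1)))) (monom 1 (q ^ r)))"
  proof (intro sum.cong refl)
    fix r assume r: "r \<in> {..<n}"
    let ?B = "map_mat (\<lambda>p. coeff p 0) (mat_delete ?D r (n - 1))"
    have eqB: "mat_delete ?D r (n - 1) = map_mat (\<lambda>x. [:x:]) ?B"
      by (rule eq_matI) (auto simp: mat_delete_def Dmat_def Mext_def)
    have dB: "det (mat_delete ?D r (n - 1)) = [:det ?B:]"
      by (rule trans[OF arg_cong[OF eqB, of det] const_det])
    moreover have "?D $$ (r, n - 1) = monom 1 (q ^ r)"
    proof -
      have "\<not> (n - 1 < i)" using i by simp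
      thus ?thesis using r i n1 by (simp add: Dmat_def Mext_def)
    qed
    have cof: "cofactor ?D r (n - 1) = [:(-1) ^ (r + (n - 1)) * det ?B:]"
      unfolding cofactor_def dB neg1_pow_poly by simp
    show "?D $$ (r, n - 1) * cofactor ?D r (n - 1) = smult ((-1) ^ (r + (n - 1)) * det ?B) (monom 1 (q ^ r))"
      using cof \<open>?D $$ (r, n - 1) = monom 1 (q ^ r)\<close> by (simp add: mult.commute)
  qed
  finally show ?thesis by (simp add: qlin_sum qlin_smult)
qed

lemma qlin_Lambda:
  assumes n1: "n \<ge> 1"
  shows "qlin q (Lambda q n (g::nat \<Rightarrow> 'a) r)"
  unfolding Lambda_def
  by (intro qlin_smult qlin_sum) (use qlin_det_Dmat[OF n1] in auto)

end


context gfq begin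

lemma pcompose_right_add:
  fixes E :: "'a poly"
  assumes "qlin q E"
  shows "pcompose E (x + y) = pcompose E x + pcompose E y"
proof -
  obtain N where N: "degree E < q ^ N" using exN by blast
  show ?thesis
    by (subst (1 2 3) qexp[OF assms N])
       (simp add: pcompose_sum pcompose_monom frob_add_poly smult_add_right sum.distrib)
qed

lemma pcompose_right_uminus:
  fixes E :: "'a poly"
  assumes "qlin q E"
  shows "pcompose E (- x) = - pcompose E x"
proof -
  obtain N where N: "degree E < q ^ N" using exN by blast
  show ?thesis
    by (subst (1 2) qexp[OF assms N])
       (simp add: pcompose_sum pcompose_monom frob_uminus_poly sum_negf)
qed

lemma pcompose_right_diff:
  fixes E :: "'a poly"
  assumes "qlin q E"
  shows "pcompose E (x - y) = pcompose E x - pcompose E y"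
  using pcompose_right_add[OF assms, of x "- y"] pcompose_right_uminus[OF assms, of y] by simp

lemma coeff_pcompose_monom_q:
  fixes P :: "'a poly"
  assumes "qlin q P"
  shows "coeff (pcompose (monom c (q ^ s)) P) (q ^ i) = (if s \<le> i then c * coeff P (q ^ (i - s)) ^ (q ^ s) else 0)"
proof -
  have "coeff (pcompose (monom c (q ^ s)) P) (q ^ i) =
        (\<Sum>s'\<le>i. (if s' = s then c else 0) * coeff P (q ^ (i - s')) ^ (q ^ s'))"
    unfolding coeff_pcompose_q[OF qlin_monom assms] by (simp add: q_inj eq_commute)
  also have "\<dots> = (\<Sum>s'\<le>i. if s' = s then c * coeff P (q ^ (i - s)) ^ (q ^ s) else 0)"
    by (intro sum.cong) auto
  also have "\<dots> = (if s \<le> i then c * coeff P (q ^ (i - s)) ^ (q ^ s) else 0)"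
    by (simp add: sum.delta')
  finally show ?thesis .
qed

lemma qdiv_aux:
  fixes Pi :: "'a poly"
  assumes n1: "n \<ge> 1" and qPi: "qlin q Pi" and c1: "coeff Pi (q ^ n) = 1" and cb: "\<And>i. i > n \<Longrightarrow> coeff Pi (q ^ i) = 0"
  shows "qlin q P \<Longrightarrow> (\<And>i. i > D \<Longrightarrow> coeff P (q ^ i) = 0) \<Longrightarrow>
    \<exists>\<beta> R. qlin q \<beta> \<and> qlin q R \<and> (\<forall>i\<ge>n. coeff R (q ^ i) = 0) \<and> P = pcompose \<beta> Pi + R"
proof (induction D arbitrary: P rule: less_induct)
  case (less D)
  show ?case
  proof (cases "D < n")
    case True
    thus ?thesis using less.prems by (intro exI[of _ 0] exI[of _ P]) auto
  next
    case False
    define c where "c = coeff P (q ^ D)"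
    define P' where "P' = P - pcompose (monom c (q ^ (D - n))) Pi"
    have cm: "coeff (pcompose (monom c (q ^ (D - n))) Pi) (q ^ i) =
       (if D - n \<le> i then c * coeff Pi (q ^ (i - (D - n))) ^ (q ^ (D - n)) else 0)" for i
      by (rule coeff_pcompose_monom_q[OF qPi])
    have qP': "qlin q P'" unfolding P'_def
      by (intro qlin_diff less.prems qlin_pcompose qPi) simp
    have bP': "coeff P' (q ^ i) = 0" if "i > D - 1" for i
    proof (cases "i = D")
      case True
      have "D - (D - n) = n" using False by simp
      hence "coeff (pcompose (monom c (q ^ (D - n))) Pi) (q ^ D) = c" using cm[of D] c1 by simp
      thus ?thesis using True by (simp add: P'_def c_def)
    next
      case f2: False
      hence "i > D" using that False by simp
      hence "i - (D - n) > n" using False by simp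
      hence "coeff (pcompose (monom c (q ^ (D - n))) Pi) (q ^ i) = 0" using cm[of i] cb q2 by simp
      thus ?thesis using less.prems(2)[OF \<open>i > D\<close>] by (simp add: P'_def)
    qed
    have "D - 1 < D" using False n1 by simp
    from less.IH[OF this qP' bP'] obtain \<beta> R where
      bR: "qlin q \<beta>" "qlin q R" "\<forall>i\<ge>n. coeff R (q ^ i) = 0" "P' = pcompose \<beta> Pi + R" by blast
    have "P = pcompose (\<beta> + monom c (q ^ (D - n))) Pi + R"
      using bR(4) by (simp add: P'_def pcompose_add algebra_simps)
    thus ?thesis using bR by (intro exI[of _ "\<beta> + monom c (q ^ (D - n))"] exI[of _ R]) (auto intro: qlin_add)
  qed
qed

lemma qdiv:
  fixes Pi :: "'a poly"
  assumes "n \<ge> 1" "qlin q Pi" "coeff Pi (q ^ n) = 1" "\<And>i. i > n \<Longrightarrow> coeff Pi (q ^ i) = 0" "qlin q P"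
  shows "\<exists>\<beta> R. qlin q \<beta> \<and> qlin q R \<and> (\<forall>i\<ge>n. coeff R (q ^ i) = 0) \<and> P = pcompose \<beta> Pi + R"
proof -
  have "\<And>i. i > degree P \<Longrightarrow> coeff P (q ^ i) = 0"
    using n_less_qn by (intro coeff_eq_0) (meson less_trans)
  thus ?thesis using qdiv_aux[OF assms(1-4) assms(5)] by blast
qed

definition rank :: "nat \<Rightarrow> nat \<times> nat \<Rightarrow> nat" where
  "rank k mo = 2 * wval k mo + snd mo"

lemma mless_rank:
  assumes "snd m1 \<in> {1, 2}" "snd m2 \<in> {1, 2}"
  shows "mless k m1 m2 \<longleftrightarrow> rank k m1 < rank k m2"
  using assms unfolding mless_def rank_def by auto

lemma rank_inj:
  assumes "snd m1 \<in> {1, 2}" "snd m2 \<in> {1, 2}" "rank k m1 = rank k m2"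
  shows "m1 = m2"
  using assms unfolding rank_def wval_def by (cases m1, cases m2) (auto split: if_splits; presburger)

lemma rank_wval:
  assumes "snd m1 \<in> {1, 2}" "snd m2 \<in> {1, 2}" "rank k m1 \<le> rank k m2"
  shows "wval k m1 \<le> wval k m2"
  using assms unfolding rank_def by auto

lemma supp_snd: "mo \<in> supp q v \<Longrightarrow> snd mo \<in> {1, 2}"
  by (auto simp: supp_def)

lemma supp_iff: "(i, j) \<in> supp q v \<longleftrightarrow> j \<in> {1, 2} \<and> coeff (comp_of j v) (q ^ i) \<noteq> 0"
  by (simp add: supp_def)

lemma supp_finite: "finite (supp q (v :: 'a poly \<times> 'a poly))"
proof (rule finite_subset)
  show "supp q v \<subseteq> {..degree (fst v) + degree (snd v)} \<times> {1, 2}"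
  proof clarify
    fix i j assume "(i, j) \<in> supp q v"
    hence "j \<in> {1,2}" "coeff (comp_of j v) (q ^ i) \<noteq> 0" by (auto simp: supp_def)
    hence "q ^ i \<le> degree (comp_of j v)" by (intro le_degree)
    moreover have "degree (comp_of j v) \<le> degree (fst v) + degree (snd v)" by (simp add: comp_of_def)
    ultimately have "i \<le> degree (fst v) + degree (snd v)" using n_less_qn[of i] by linarith
    thus "i \<in> {..degree (fst v) + degree (snd v)} \<and> j \<in> {1, 2}" using \<open>j \<in> {1,2}\<close> by simp
  qed
qed simp

lemma lm_eqI:
  assumes "mo \<in> supp q v" "\<And>m'. m' \<in> supp q v \<Longrightarrow> m' \<noteq> mo \<Longrightarrow> rank k m' < rank k mo"
  shows "lm q k v = mo"
  unfolding lm_def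
proof (rule the_equality)
  have "\<forall>m'\<in>supp q v. m' \<noteq> mo \<longrightarrow> mless k m' mo"
  proof (intro ballI impI)
    fix m' assume "m' \<in> supp q v" "m' \<noteq> mo"
    thus "mless k m' mo" using mless_rank[OF supp_snd[OF \<open>m' \<in> supp q v\<close>] supp_snd[OF assms(1)]] assms(2) by blast
  qed
  thus "mo \<in> supp q v \<and> (\<forall>m'\<in>supp q v. m' \<noteq> mo \<longrightarrow> mless k m' mo)"
    using assms(1) by blast
next
  fix m2 assume m2: "m2 \<in> supp q v \<and> (\<forall>m'\<in>supp q v. m' \<noteq> m2 \<longrightarrow> mless k m' m2)"
  show "m2 = mo"
  proof (rule ccontr)
    assume ne: "m2 \<noteq> mo"
    hence "mless k mo m2" using m2 assms(1) by auto
    hence "rank k mo < rank k m2" using mless_rank[OF supp_snd[OF assms(1)] supp_snd] m2 by blast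
    moreover have "rank k m2 < rank k mo" using assms(2) m2 ne by blast
    ultimately show False by simp
  qed
qed

lemma lm_ex:
  assumes "supp q (v :: 'a poly \<times> 'a poly) \<noteq> {}"
  shows "lm q k v \<in> supp q v" "\<And>m'. m' \<in> supp q v \<Longrightarrow> m' \<noteq> lm q k v \<Longrightarrow> rank k m' < rank k (lm q k v)"
proof -
  have fR: "finite (rank k ` supp q v)" using supp_finite by simp
  have "Max (rank k ` supp q v) \<in> rank k ` supp q v" using Max_in[OF fR] assms by simp
  then obtain mo where mo1: "mo \<in> supp q v" and mo2: "rank k mo = Max (rank k ` supp q v)" by auto
  have le: "rank k m' \<le> rank k mo" if "m' \<in> supp q v" for m'
    using Max_ge[OF fR] that mo2 by simp
  have mx: "rank k m' < rank k mo" if "m' \<in> supp q v" "m' \<noteq> mo" for m'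
  proof -
    have "rank k m' \<noteq> rank k mo" using rank_inj[OF supp_snd[OF that(1)] supp_snd[OF mo1]] that(2) by blast
    thus ?thesis using le[OF that(1)] by simp
  qed
  have "lm q k v = mo" by (rule lm_eqI[OF mo1 mx])
  thus "lm q k v \<in> supp q v" "\<And>m'. m' \<in> supp q v \<Longrightarrow> m' \<noteq> lm q k v \<Longrightarrow> rank k m' < rank k (lm q k v)"
    using mo1 mx by auto
qed

lemma lm_le:
  assumes "supp q (v :: 'a poly \<times> 'a poly) \<noteq> {}" "m' \<in> supp q v"
  shows "rank k m' \<le> rank k (lm q k v)"
proof (cases "m' = lm q k v")
  case False thus ?thesis using lm_ex(2)[OF assms(1) assms(2) False] by simp
qed simp

lemma wdeg_lm:
  assumes "supp q (v :: 'a poly \<times> 'a poly) \<noteq> {}"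
  shows "wdeg q k v = wval k (lm q k v)"
  unfolding wdeg_def
proof (rule Max_eqI)
  show "finite (wval k ` supp q v)" using supp_finite by simp
  show "wval k (lm q k v) \<in> wval k ` supp q v" using lm_ex(1)[OF assms] by simp
  fix y assume "y \<in> wval k ` supp q v"
  then obtain m' where m': "m' \<in> supp q v" "y = wval k m'" by auto
  have "rank k m' \<le> rank k (lm q k v)" by (rule lm_le[OF assms m'(1)])
  thus "y \<le> wval k (lm q k v)"
    using rank_wval supp_snd m'(1) lm_ex(1)[OF assms] m'(2) by blast
qed

definition qpair :: "nat \<Rightarrow> 'b::zero poly \<times> 'b poly \<Rightarrow> bool" where
  "qpair q' v \<longleftrightarrow> qlin q' (fst v) \<and> qlin q' (snd v)"

lemma supp_nonempty:
  assumes "qpair q (v :: 'a poly \<times> 'a poly)" "v \<noteq> 0"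
  shows "supp q v \<noteq> {}"
proof -
  obtain f1 f2 where v: "v = (f1, f2)" by (cases v)
  show ?thesis
  proof (cases "f1 = 0")
    case False
    hence "(qdeg q f1, 1) \<in> supp q v"
      using qdeg_facts(1)[of f1] assms(1) by (auto simp: supp_def comp_of_def qpair_def v)
    thus ?thesis by auto
  next
    case True
    hence "f2 \<noteq> 0" using assms(2) v by (auto simp: zero_prod_def)
    hence "(qdeg q f2, 2) \<in> supp q v"
      using qdeg_facts(1)[of f2] assms(1) by (auto simp: supp_def comp_of_def qpair_def v)
    thus ?thesis by auto
  qed
qed

lemma comp_of_lcomp: "comp_of j (lcomp a v) = pcompose a (comp_of j v)"
  by (simp add: comp_of_def lcomp_def)

lemma comp_of_add: "comp_of j (v + w) = comp_of j v + comp_of j w"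
  by (simp add: comp_of_def)

lemma qpair_lcomp: "qlin q a \<Longrightarrow> qpair q v \<Longrightarrow> qpair q (lcomp a (v :: 'a poly \<times> 'a poly))"
  by (simp add: qpair_def lcomp_def qlin_pcompose)

lemma qpair_comp: "qpair q (v :: 'a poly \<times> 'a poly) \<Longrightarrow> j \<in> {1, 2} \<Longrightarrow> qlin q (comp_of j v)"
  by (auto simp: qpair_def comp_of_def)

lemma lm_lcomp:
  fixes a :: "'a poly" and v :: "'a poly \<times> 'a poly"
  assumes qa: "qlin q a" and a0: "a \<noteq> 0" and qv: "qpair q v" and sv: "supp q v \<noteq> {}"
  shows "lm q k (lcomp a v) = (qdeg q a + fst (lm q k v), snd (lm q k v))"
    and "supp q (lcomp a v) \<noteq> {}"
proof -
  obtain i0 j0 where l: "lm q k v = (i0, j0)" by (cases "lm q k v")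
  define A where "A = qdeg q a"
  have "snd (lm q k v) \<in> {1, 2}" by (rule supp_snd[OF lm_ex(1)[OF sv, where k=k]])
  hence j0: "j0 \<in> {1, 2}" using l by simp
  have f0: "coeff (comp_of j0 v) (q ^ i0) \<noteq> 0" using lm_ex(1)[OF sv, where k=k] l by (simp add: supp_def)
  have qf: "qlin q (comp_of j0 v)" using qpair_comp[OF qv j0] .
  have mx: "rank k (i, j) < rank k (i0, j0)" if "(i, j) \<in> supp q v" "(i, j) \<noteq> (i0, j0)" for i j
    using lm_ex(2)[OF sv that(1), where k=k] that(2) l by simp
  have big0: "coeff (comp_of j0 v) (q ^ i) = 0" if "i > i0" for i
  proof (rule ccontr)
    assume "coeff (comp_of j0 v) (q ^ i) \<noteq> 0"
    hence "(i, j0) \<in> supp q v" using j0 by (simp add: supp_def)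
    from mx[OF this] that show False by (auto simp: rank_def wval_def)
  qed
  have aA: "coeff a (q ^ A) \<noteq> 0" "\<And>s. coeff a (q ^ s) \<noteq> 0 \<Longrightarrow> s \<le> A"
    using qdeg_facts[OF qa a0] by (auto simp: A_def)
  have inS: "(A + i0, j0) \<in> supp q (lcomp a v)"
  proof -
    have "coeff (pcompose a (comp_of j0 v)) (q ^ (A + i0)) =
          (\<Sum>s\<le>A + i0. coeff a (q ^ s) * coeff (comp_of j0 v) (q ^ (A + i0 - s)) ^ (q ^ s))"
      by (rule coeff_pcompose_q[OF qa qf])
    also have "\<dots> = (\<Sum>s\<le>A + i0. if s = A then coeff a (q ^ A) * coeff (comp_of j0 v) (q ^ i0) ^ (q ^ A) else 0)"
    proof (intro sum.cong refl)
      fix s assume s: "s \<in> {..A + i0}"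
      show "coeff a (q ^ s) * coeff (comp_of j0 v) (q ^ (A + i0 - s)) ^ (q ^ s) =
            (if s = A then coeff a (q ^ A) * coeff (comp_of j0 v) (q ^ i0) ^ (q ^ A) else 0)"
      proof (cases "s = A")
        case False
        show ?thesis
        proof (cases "s < A")
          case True
          hence "A + i0 - s > i0" by simp
          thus ?thesis using big0 False q2 by simp
        next
          case f2: False
          hence "coeff a (q ^ s) = 0" using aA(2) False by (meson le_antisym not_le)
          thus ?thesis using False by simp
        qed
      qed simp
    qed
    also have "\<dots> = coeff a (q ^ A) * coeff (comp_of j0 v) (q ^ i0) ^ (q ^ A)"
      by (simp add: sum.delta')
    finally have "coeff (pcompose a (comp_of j0 v)) (q ^ (A + i0)) \<noteq> 0"
      using aA(1) f0 by simp
    thus ?thesis using j0 by (simp add: supp_def comp_of_lcomp)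
  qed
  have mx2: "rank k m' < rank k (A + i0, j0)" if "m' \<in> supp q (lcomp a v)" "m' \<noteq> (A + i0, j0)" for m'
  proof -
    obtain u j where m': "m' = (u, j)" by (cases m')
    have j: "j \<in> {1, 2}" and cu: "coeff (pcompose a (comp_of j v)) (q ^ u) \<noteq> 0"
      using that(1) m' by (auto simp: supp_def comp_of_lcomp)
    obtain s where s: "s \<le> u" "coeff a (q ^ s) \<noteq> 0" "coeff (comp_of j v) (q ^ (u - s)) \<noteq> 0"
      using coeff_pcompose_q_nz[OF qa qpair_comp[OF qv j] cu] by blast
    have sA: "s \<le> A" using aA(2)[OF s(2)] .
    have ins: "(u - s, j) \<in> supp q v" using s(3) j by (simp add: supp_def)
    have le: "rank k (u - s, j) \<le> rank k (i0, j0)"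
      using lm_le[OF sv ins, where k=k] l by simp
    have r1: "rank k (u, j) = rank k (u - s, j) + 2 * s" using s(1) by (simp add: rank_def wval_def)
    have r2: "rank k (A + i0, j0) = rank k (i0, j0) + 2 * A" by (simp add: rank_def wval_def)
    show ?thesis
    proof (cases "s = A \<and> (u - s, j) = (i0, j0)")
      case True
      hence "m' = (A + i0, j0)" using m' s(1) by auto
      thus ?thesis using that(2) by simp
    next
      case False
      hence "rank k (u - s, j) < rank k (i0, j0) \<or> s < A"
        using le sA mx[OF ins] by auto
      thus ?thesis using r1 r2 le sA m' by auto
    qed
  qed
  show "lm q k (lcomp a v) = (qdeg q a + fst (lm q k v), snd (lm q k v))"
    using lm_eqI[OF inS mx2] l by (simp add: A_def)
  show "supp q (lcomp a v) \<noteq> {}" using inS by auto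
qed

lemma lm_add:
  fixes v w :: "'a poly \<times> 'a poly"
  assumes sv: "supp q v \<noteq> {}" and sw: "supp q w \<noteq> {}" and lt: "rank k (lm q k w) < rank k (lm q k v)"
  shows "lm q k (v + w) = lm q k v" "supp q (v + w) \<noteq> {}"
proof -
  obtain i0 j0 where l: "lm q k v = (i0, j0)" by (cases "lm q k v")
  have nw: "lm q k v \<notin> supp q w"
  proof
    assume "lm q k v \<in> supp q w"
    hence "rank k (lm q k v) \<le> rank k (lm q k w)" by (rule lm_le[OF sw])
    thus False using lt by simp
  qed
  have inS: "lm q k v \<in> supp q (v + w)"
    using lm_ex(1)[OF sv, where k=k] nw l by (auto simp: supp_def comp_of_add)
  have mx: "rank k m' < rank k (lm q k v)" if "m' \<in> supp q (v + w)" "m' \<noteq> lm q k v" for m'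
  proof -
    obtain u j where m': "m' = (u, j)" by (cases m')
    have "m' \<in> supp q v \<or> m' \<in> supp q w"
      using that(1) m' by (auto simp: supp_def comp_of_add)
    thus ?thesis
    proof
      assume "m' \<in> supp q v" thus ?thesis using lm_ex(2)[OF sv] that(2) by blast
    next
      assume a: "m' \<in> supp q w"
      have "rank k m' \<le> rank k (lm q k w)" by (rule lm_le[OF sw a])
      thus ?thesis using lt by simp
    qed
  qed
  show "lm q k (v + w) = lm q k v" by (rule lm_eqI[OF inS mx])
  show "supp q (v + w) \<noteq> {}" using inS by auto
qed

end


lemma gfq_inst:
  assumes pp: "prime_power q" and m1: "m \<ge> 1" and card: "card (UNIV :: 'a::{field,finite} set) = q ^ m"
  shows "gfq TYPE('a) q m"
proof -
  obtain p e where pe: "prime p" "e \<ge> 1" "q = p ^ e" using pp by (auto simp: prime_power_def)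
  have "(\<Sum>y\<in>(UNIV::'a set). y + 1) = (\<Sum>y\<in>(UNIV::'a set). y)"
    by (rule sum.reindex_bij_witness[of _ "\<lambda>y. y - 1" "\<lambda>y. y + 1"]) auto
  hence c0: "of_nat (card (UNIV :: 'a set)) = (0::'a)" by (simp add: sum.distrib)
  have cp: "prime CHAR('a)"
    using prime_CHAR_semidom[where ?'a='a] finite_imp_CHAR_pos[where ?'a='a] by auto
  have "CHAR('a) dvd card (UNIV :: 'a set)" using c0 by (simp add: of_nat_eq_0_iff_char_dvd)
  also have "card (UNIV :: 'a set) = p ^ (e * m)" using card pe by (simp add: power_mult)
  finally have "CHAR('a) dvd p" using prime_dvd_power[OF cp] by blast
  hence "CHAR('a) = p" using primes_dvd_imp_eq[OF cp pe(1)] by simp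
  thus ?thesis using pe m1 card by unfold_locales auto
qed

context gfq begin

lemma qlin_x: "qlin q (monom (1::'a) 1)"
  using qlin_monom[of 1 0] by simp

lemma lcomp_0: "lcomp 0 (v :: 'a poly \<times> 'a poly) = 0"
  by (simp add: lcomp_def zero_prod_def)

lemma lcomp_x: "lcomp (monom 1 1) (v :: 'a poly \<times> 'a poly) = v"
  unfolding lcomp_def monom_1_1 by (simp add: pcompose_pCons)

lemma supp_0: "supp q (0 :: 'a poly \<times> 'a poly) = {}"
  by (auto simp: supp_def comp_of_def)

lemma indep_insertI:
  assumes "finite I" "j \<notin> I" "fq_indep q (v::nat \<Rightarrow> 'a) I" "v j \<notin> fspan q I v"
  shows "fq_indep q v (insert j I)"
  unfolding fq_indep_def
proof (intro allI impI)
  fix c assume c: "(\<forall>i\<in>insert j I. c i \<in> Fq q) \<and> (\<Sum>i\<in>insert j I. c i * v i) = 0"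
  have s: "c j * v j + (\<Sum>i\<in>I. c i * v i) = 0" using c assms(1,2) by (simp add: sum.insert)
  have cj: "c j = 0"
  proof (rule ccontr)
    assume cj: "c j \<noteq> 0"
    have "v j = (\<Sum>i\<in>I. (- inverse (c j) * c i) * v i)"
    proof -
      have "v j = - inverse (c j) * (\<Sum>i\<in>I. c i * v i)"
        using s cj by (simp add: field_simps add_eq_0_iff2)
      thus ?thesis by (simp add: sum_distrib_left mult.assoc)
    qed
    moreover have "(\<Sum>i\<in>I. (- inverse (c j) * c i) * v i) \<in> fspan q I v"
      unfolding fspan_def using c
      by (intro CollectI exI[of _ "\<lambda>i. - inverse (c j) * c i"]) (auto intro!: Fq_mult Fq_uminus Fq_inverse)
    ultimately show False using assms(4) by simp
  qed
  hence "(\<Sum>i\<in>I. c i * v i) = 0" using s by simp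
  hence "\<forall>i\<in>I. c i = 0" using assms(3) c unfolding fq_indep_def by blast
  thus "\<forall>i\<in>insert j I. c i = 0" using cj by simp
qed

lemma dR_props:
  fixes a b :: "nat \<Rightarrow> 'a"
  shows "dR q n a b \<le> n"
    "\<exists>I. I \<subseteq> {..<n} \<and> fq_indep q (\<lambda>i. a i - b i) I \<and> card I = dR q n a b"
    "\<And>I. I \<subseteq> {..<n} \<Longrightarrow> fq_indep q (\<lambda>i. a i - b i) I \<Longrightarrow> card I \<le> dR q n a b"
proof -
  let ?T = "{card I | I. I \<subseteq> {..<n} \<and> fq_indep q (\<lambda>i. a i - b i) I}"
  have sub: "?T \<subseteq> {..n}"
  proof
    fix x assume "x \<in> ?T"
    then obtain I where I: "I \<subseteq> {..<n}" "x = card I" by auto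
    have "card I \<le> card {..<n::nat}" by (rule card_mono[OF _ I(1)]) simp
    hence "x \<le> card {..<n::nat}" using I(2) by simp
    thus "x \<in> {..n}" by simp
  qed
  hence fin: "finite ?T" by (rule finite_subset) simp
  have "fq_indep q (\<lambda>i. a i - b i) {}" by (simp add: fq_indep_def)
  hence ne: "?T \<noteq> {}" by blast
  show "dR q n a b \<le> n" unfolding dR_def using Max_in[OF fin ne] sub by auto
  show "\<exists>I. I \<subseteq> {..<n} \<and> fq_indep q (\<lambda>i. a i - b i) I \<and> card I = dR q n a b"
    unfolding dR_def using Max_in[OF fin ne] by auto
  show "\<And>I. I \<subseteq> {..<n} \<Longrightarrow> fq_indep q (\<lambda>i. a i - b i) I \<Longrightarrow> card I \<le> dR q n a b"
    unfolding dR_def using Max_ge[OF fin] by blast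
qed

end


locale mset = gfq q m ty for q m :: nat and ty :: "'a::{field,finite} itself" +
  fixes n k :: nat and g r :: "nat \<Rightarrow> 'a" and b1 b2 :: "'a poly \<times> 'a poly"
  assumes k1: "1 \<le> k" and kn: "k \<le> n" and ind: "fq_indep q g {..<n}"
    and mb: "minimal_basis q k (interp_module q n g r) {b1, b2}"
    and lp1: "lpos q k b1 = 1" and lp2: "lpos q k b2 = 2"
begin

abbreviation "PP \<equiv> Pi_g q n g"
abbreviation "Lam \<equiv> Lambda q n g r"
abbreviation "MM \<equiv> interp_module q n g r"
abbreviation "V \<equiv> fspan q {..<n} g"

lemma n1: "n \<ge> 1" using k1 kn by simp

lemma Pi_props: "qlin q PP" "coeff PP (q ^ n) = 1" "degree PP = q ^ n"
  using SP_props[OF _ ind] by (auto simp: Pi_g_SP)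

lemma Pi_big: "i > n \<Longrightarrow> coeff PP (q ^ i) = 0"
  using Pi_props(3) q_less by (intro coeff_eq_0) simp

lemma Pi_V: "v \<in> V \<Longrightarrow> poly PP v = 0"
  by (auto simp: Pi_g_def fq_span_fspan poly_prod)

lemma card_V: "card V = q ^ n"
  using card_fspan_eq[OF _ ind] by simp

lemma qLam: "qlin q Lam" by (rule qlin_Lambda[OF n1])

lemma V_repr: "v \<in> V \<Longrightarrow> \<exists>c. (\<forall>i<n. c i \<in> Fq q) \<and> v = (\<Sum>i<n. c i * g i)"
  by (auto simp: fspan_def)

lemma Lam_V:
  assumes "\<forall>i<n. c i \<in> Fq q"
  shows "poly Lam (\<Sum>i<n. c i * g i) = (\<Sum>i<n. c i * r i)"
proof -
  have "poly Lam (\<Sum>i<n. c i * g i) = (\<Sum>i<n. c i * poly Lam (g i))"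
    using assms by (intro qlin_poly_lincomb[OF qLam]) auto
  also have "\<dots> = (\<Sum>i<n. c i * r i)"
    by (intro sum.cong refl) (simp add: Lambda_interp[OF n1 ind])
  finally show ?thesis .
qed

lemma M_form:
  assumes "v \<in> MM"
  shows "\<exists>\<beta> \<gamma>. qlin q \<beta> \<and> qlin q \<gamma> \<and> v = (pcompose \<beta> PP - pcompose \<gamma> Lam, \<gamma>)"
proof -
  obtain \<beta> \<gamma> where bg: "qlin q \<beta>" "qlin q \<gamma>"
    "v = lcomp \<beta> (PP, 0) + lcomp \<gamma> (- Lam, monom 1 1)"
    using assms by (auto simp: interp_module_def)
  have "v = (pcompose \<beta> PP - pcompose \<gamma> Lam, \<gamma>)"
    using bg by (simp add: lcomp_def qlin_pcompose_0 pcompose_x[simplified] pcompose_right_uminus)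
  thus ?thesis using bg by blast
qed

lemma M_qpair:
  assumes "v \<in> MM" shows "qpair q v"
proof -
  obtain \<beta> \<gamma> where bg: "qlin q \<beta>" "qlin q \<gamma>" "v = (pcompose \<beta> PP - pcompose \<gamma> Lam, \<gamma>)"
    using M_form[OF assms] by blast
  have "qlin q (pcompose \<beta> PP - pcompose \<gamma> Lam)"
    by (intro qlin_diff qlin_pcompose bg qLam Pi_props(1))
  thus ?thesis using bg by (simp add: qpair_def)
qed

lemma basis: "is_basis q MM {b1, b2}" using mb by (simp add: minimal_basis_def)

lemma b_in: "b1 \<in> MM" "b2 \<in> MM" using basis by (auto simp: is_basis_def)

lemma b12: "b1 \<noteq> b2" using lp1 lp2 by auto

lemma sum2: "(\<Sum>f\<in>{b1, b2}. F f) = F b1 + F b2" for F :: "'a poly \<times> 'a poly \<Rightarrow> 'a poly \<times> 'a poly"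
  using b12 by simp

lemma expand:
  assumes "v \<in> MM"
  shows "\<exists>a1 a2. qlin q a1 \<and> qlin q a2 \<and> v = lcomp a1 b1 + lcomp a2 b2"
proof -
  obtain a where a: "\<forall>f\<in>{b1, b2}. qlin q (a f)" "v = (\<Sum>f\<in>{b1, b2}. lcomp (a f) f)"
    using basis assms unfolding is_basis_def by blast
  thus ?thesis using sum2 by auto
qed

lemma indepb:
  assumes "qlin q a1" "qlin q a2" "lcomp a1 b1 + lcomp a2 b2 = 0"
  shows "a1 = 0 \<and> a2 = 0"
proof -
  let ?a = "\<lambda>f. if f = b1 then a1 else a2"
  have "\<forall>f\<in>{b1, b2}. qlin q (?a f)" using assms by auto
  moreover have "(\<Sum>f\<in>{b1, b2}. lcomp (?a f) f) = 0" using assms(3) b12 by (simp add: sum2)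
  moreover have "\<forall>a. (\<forall>f\<in>{b1, b2}. qlin q (a f)) \<and> (\<Sum>f\<in>{b1, b2}. lcomp (a f) f) = 0 \<longrightarrow> (\<forall>f\<in>{b1, b2}. a f = 0)"
    using basis unfolding is_basis_def by (elim conjE)
  ultimately have "\<forall>f\<in>{b1, b2}. ?a f = 0" by (elim allE[of _ ?a]) (erule mp, rule conjI)
  thus ?thesis using b12 by auto
qed

lemma b_nz: "b1 \<noteq> 0" "b2 \<noteq> 0"
proof -
  show "b1 \<noteq> 0"
  proof
    assume "b1 = 0"
    hence "lcomp (monom 1 1) b1 + lcomp 0 b2 = 0" by (simp only: lcomp_x lcomp_0) simp
    thus False using indepb[OF qlin_x qlin_0] by simp
  qed
  show "b2 \<noteq> 0"
  proof
    assume "b2 = 0"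
    hence "lcomp 0 b1 + lcomp (monom 1 1) b2 = 0" by (simp only: lcomp_x lcomp_0) simp
    thus False using indepb[OF qlin_0 qlin_x] by simp
  qed
qed

lemma sb: "supp q b1 \<noteq> {}" "supp q b2 \<noteq> {}"
  using supp_nonempty[OF M_qpair[OF b_in(1)] b_nz(1)] supp_nonempty[OF M_qpair[OF b_in(2)] b_nz(2)] by auto

definition "l1 = fst (lm q k b1)"
definition "l2 = fst (lm q k b2)"

lemma lm_b: "lm q k b1 = (l1, 1)" "lm q k b2 = (l2, 2)"
  using lp1 lp2 by (auto simp: l1_def l2_def lpos_def prod_eq_iff)

lemma wdeg_b: "wdeg q k b1 = l1" "wdeg q k b2 = l2 + (k - 1)"
  using wdeg_lm[OF sb(1)] wdeg_lm[OF sb(2)] lm_b by (auto simp: wval_def)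

lemma rank_lt_lm:
  fixes v :: "'a poly \<times> 'a poly"
  assumes "supp q v \<noteq> {}" "(u, j) \<in> supp q v" "(u, j) \<noteq> lm q k v"
  shows "rank k (u, j) < rank k (lm q k v)"
  using lm_ex(2)[OF assms(1) assms(2,3)] .

lemma coeff_lm_comp: "coeff (fst b1) (q ^ l1) \<noteq> 0" "coeff (snd b2) (q ^ l2) \<noteq> 0"
  using lm_ex(1)[OF sb(1), where k=k] lm_ex(1)[OF sb(2), where k=k] lm_b
  by (auto simp: supp_def comp_of_def)

lemma fst_b1_big: "i > l1 \<Longrightarrow> coeff (fst b1) (q ^ i) = 0"
proof (rule ccontr)
  assume "i > l1" "coeff (fst b1) (q ^ i) \<noteq> 0"
  hence "(i, 1) \<in> supp q b1" by (simp add: supp_def comp_of_def)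
  from rank_lt_lm[OF sb(1) this] \<open>i > l1\<close> lm_b show False by (auto simp: rank_def wval_def)
qed

lemma snd_b1_small: "coeff (snd b1) (q ^ u) \<noteq> 0 \<Longrightarrow> u + (k - 1) < l1"
proof -
  assume "coeff (snd b1) (q ^ u) \<noteq> 0"
  hence "(u, 2) \<in> supp q b1" by (simp add: supp_def comp_of_def)
  from rank_lt_lm[OF sb(1) this] lm_b show ?thesis by (auto simp: rank_def wval_def)
qed

lemma snd_b2_big: "i > l2 \<Longrightarrow> coeff (snd b2) (q ^ i) = 0"
proof (rule ccontr)
  assume "i > l2" "coeff (snd b2) (q ^ i) \<noteq> 0"
  hence "(i, 2) \<in> supp q b2" by (simp add: supp_def comp_of_def)
  from rank_lt_lm[OF sb(2) this] \<open>i > l2\<close> lm_b show False by (auto simp: rank_def wval_def)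
qed

lemma qdeg_fst_b1: "qdeg q (fst b1) = l1"
proof -
  have ql: "qlin q (fst b1)" using M_qpair[OF b_in(1)] by (simp add: qpair_def)
  have nz: "fst b1 \<noteq> 0" using coeff_lm_comp(1) by auto
  have "qdeg q (fst b1) \<le> l1" by (rule qdeg_le[OF ql nz]) (rule fst_b1_big)
  thus ?thesis using qdeg_facts(2)[OF ql nz coeff_lm_comp(1)] by simp
qed

lemma qdeg_snd_b2: "qdeg q (snd b2) = l2"
proof -
  have ql: "qlin q (snd b2)" using M_qpair[OF b_in(2)] by (simp add: qpair_def)
  have nz: "snd b2 \<noteq> 0" using coeff_lm_comp(2) by auto
  have "qdeg q (snd b2) \<le> l2" by (rule qdeg_le[OF ql nz]) (rule snd_b2_big)
  thus ?thesis using qdeg_facts(2)[OF ql nz coeff_lm_comp(2)] by simp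
qed

end


context mset begin

lemma codeword:
  obtains c0 f where "qlin q f" "f = 0 \<or> qdeg q f < k" "\<forall>i<n. c0 i = poly f (g i)"
    "Min {dR q n c r | c. c \<in> gabidulin q n k g} = dR q n c0 r"
proof -
  let ?S = "{dR q n c r | c. c \<in> gabidulin q n k g}"
  have "?S \<subseteq> {..n}" using dR_props(1) by auto
  hence fin: "finite ?S" by (rule finite_subset) simp
  have "(\<lambda>_. 0) \<in> gabidulin q n k g"
    unfolding gabidulin_def by (intro CollectI exI[of _ 0]) simp
  hence ne: "?S \<noteq> {}" by blast
  from Min_in[OF fin ne] obtain c0 where c0: "c0 \<in> gabidulin q n k g" "Min ?S = dR q n c0 r" by auto
  then obtain f where "qlin q f" "f = 0 \<or> qdeg q f < k" "\<forall>i<n. c0 i = poly f (g i)"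
    by (auto simp: gabidulin_def)
  thus ?thesis using that c0(2) by blast
qed

lemma fbound:
  assumes "qlin q (f::'a poly)" "f = 0 \<or> qdeg q f < k" "coeff f (q ^ u) \<noteq> 0"
  shows "u \<le> k - 1"
proof -
  have "f \<noteq> 0" using assms(3) by auto
  hence "qdeg q f < k" using assms(2) by simp
  moreover have "u \<le> qdeg q f" using qdeg_facts(2)[OF assms(1) \<open>f \<noteq> 0\<close> assms(3)] .
  ultimately show ?thesis by simp
qed

context
  fixes c0 :: "nat \<Rightarrow> 'a" and f :: "'a poly" and t :: nat
  assumes qf: "qlin q f" and fk: "f = 0 \<or> qdeg q f < k" and c0f: "\<forall>i<n. c0 i = poly f (g i)"
    and tdef: "t = dR q n c0 r"
begin

definition "dd i = c0 i - r i"

lemma I0_ex: "\<exists>I0. I0 \<subseteq> {..<n} \<and> fq_indep q dd I0 \<and> card I0 = t \<and> (\<forall>j<n. dd j \<in> fspan q I0 dd)"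
proof -
  obtain I0 where I0: "I0 \<subseteq> {..<n}" "fq_indep q dd I0" "card I0 = t"
    using dR_props(2)[of n c0 r] tdef by (auto simp: dd_def[abs_def])
  have fin: "finite I0" using I0(1) finite_subset by blast
  have "dd j \<in> fspan q I0 dd" if j: "j < n" for j
  proof (cases "j \<in> I0")
    case True thus ?thesis using fspan_elem[OF fin] by blast
  next
    case False
    show ?thesis
    proof (rule ccontr)
      assume "dd j \<notin> fspan q I0 dd"
      hence ind': "fq_indep q dd (insert j I0)" by (rule indep_insertI[OF fin False I0(2)])
      have "card (insert j I0) \<le> dR q n c0 r"
        using dR_props(3)[of "insert j I0" n c0 r] ind' I0(1) j by (auto simp: dd_def[abs_def])
      thus False using I0(3) tdef fin False by simp
    qed
  qed
  thus ?thesis using I0 by blast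
qed

lemma VW:
  assumes I0: "\<forall>j<n. dd j \<in> fspan q I0 dd" and v: "v \<in> V"
  shows "poly f v - poly Lam v \<in> fspan q I0 dd"
proof -
  obtain c where c: "\<forall>i<n. c i \<in> Fq q" "v = (\<Sum>i<n. c i * g i)" using V_repr[OF v] by blast
  have "poly f v = (\<Sum>i<n. c i * poly f (g i))"
    unfolding c(2) using c(1) by (intro qlin_poly_lincomb[OF qf]) auto
  also have "\<dots> = (\<Sum>i<n. c i * c0 i)" using c0f by simp
  finally have pf: "poly f v = (\<Sum>i<n. c i * c0 i)" .
  have pL: "poly Lam v = (\<Sum>i<n. c i * r i)" using Lam_V[OF c(1)] c(2) by simp
  have "poly f v - poly Lam v = (\<Sum>i<n. c i * dd i)"
    by (simp add: pf pL dd_def right_diff_distrib sum_subtractf)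
  also have "\<dots> \<in> fspan q I0 dd"
    using I0 c(1) by (intro fspan_lincomb) auto
  finally show ?thesis .
qed

lemma part_l1: "n \<le> t + l1"
proof -
  obtain I0 where I0: "I0 \<subseteq> {..<n}" "fq_indep q dd I0" "card I0 = t" "\<forall>j<n. dd j \<in> fspan q I0 dd"
    using I0_ex by blast
  have finI0: "finite I0" using I0(1) finite_subset by blast
  obtain \<beta> \<gamma> where bg: "qlin q \<beta>" "qlin q \<gamma>" "b1 = (pcompose \<beta> PP - pcompose \<gamma> Lam, \<gamma>)"
    using M_form[OF b_in(1)] by blast
  have sndb1: "snd b1 = \<gamma>" using bg by simp
  have qfst: "qlin q (fst b1)" using M_qpair[OF b_in(1)] by (simp add: qpair_def)
  define h where "h = fst b1 + pcompose \<gamma> f"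
  have qh: "qlin q h" unfolding h_def by (intro qlin_add qfst qlin_pcompose bg qf)
  have cgf: "coeff (pcompose \<gamma> f) (q ^ u) = 0" if "u \<ge> l1" for u
  proof (rule ccontr)
    assume "coeff (pcompose \<gamma> f) (q ^ u) \<noteq> 0"
    then obtain s where s: "s \<le> u" "coeff \<gamma> (q ^ s) \<noteq> 0" "coeff f (q ^ (u - s)) \<noteq> 0"
      using coeff_pcompose_q_nz[OF bg(2) qf] by blast
    have "s + (k - 1) < l1" using snd_b1_small s(2) sndb1 by simp
    moreover have "u - s \<le> k - 1" by (rule fbound[OF qf fk s(3)])
    ultimately show False using that s(1) by linarith
  qed
  have ch: "coeff h (q ^ l1) \<noteq> 0" using coeff_lm_comp(1) cgf by (simp add: h_def)
  hence h0: "h \<noteq> 0" by auto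
  have dh: "degree h \<le> q ^ l1"
    by (rule qlin_degree_le[OF qh]) (simp add: h_def cgf fst_b1_big)
  have hV: "poly h v = poly \<gamma> (poly f v - poly Lam v)" if "v \<in> V" for v
  proof -
    have "poly h v = poly \<beta> (poly PP v) - poly \<gamma> (poly Lam v) + poly \<gamma> (poly f v)"
      using bg(3) by (simp add: h_def poly_pcompose)
    also have "\<dots> = poly \<gamma> (poly f v - poly Lam v)"
      using Pi_V[OF that] qlin_poly0[OF bg(1)] qlin_poly_diff[OF bg(2)] by simp
    finally show ?thesis .
  qed
  have img: "(poly h) ` V \<subseteq> (poly \<gamma>) ` fspan q I0 dd"
    using hV VW[OF I0(4)] by auto
  have "card ((poly h) ` V) \<le> card ((poly \<gamma>) ` fspan q I0 dd)"
    by (rule card_mono[OF _ img]) simp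
  also have "\<dots> \<le> card (fspan q I0 dd)" by (rule card_image_le) simp
  also have "\<dots> \<le> q ^ t" using card_fspan_le[OF finI0] I0(3) by simp
  finally have cimg: "card ((poly h) ` V) \<le> q ^ t" .
  have "card {v\<in>V. poly h v = 0} \<le> card {x. poly h x = 0}"
    by (intro card_mono poly_roots_finite h0) auto
  also have "\<dots> \<le> degree h" by (rule card_poly_roots_bound[OF h0])
  finally have cker: "card {v\<in>V. poly h v = 0} \<le> q ^ l1" using dh by simp
  have "q ^ n = card V" using card_V by simp
  also have "\<dots> \<le> card ((poly h) ` V) * card {v\<in>V. poly h v = 0}"
    by (rule card_ker_img) (auto intro: fspan_diff simp: qlin_poly_diff[OF qh])
  also have "\<dots> \<le> q ^ t * q ^ l1" by (intro mult_le_mono cimg cker)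
  also have "\<dots> = q ^ (t + l1)" by (simp add: power_add)
  finally show ?thesis using q_le by simp
qed


lemma part_l2: "l2 \<le> t"
proof -
  obtain I0 where I0: "I0 \<subseteq> {..<n}" "fq_indep q dd I0" "card I0 = t" "\<forall>j<n. dd j \<in> fspan q I0 dd"
    using I0_ex by blast
  have finI0: "finite I0" using I0(1) finite_subset by blast
  define E where "E = SP q I0 dd"
  have Ep: "qlin q E" "coeff E (q ^ t) = 1" "degree E = q ^ t"
    using SP_props[OF finI0 I0(2)] I0(3) by (auto simp: E_def)
  have E0: "E \<noteq> 0" using Ep(2) by auto
  have qdE: "qdeg q E = t" using qdeg_facts(3)[OF Ep(1) E0] Ep(3) q_inj by simp
  have Esmall: "coeff E (q ^ u) \<noteq> 0 \<Longrightarrow> u \<le> t" for u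
    using qdeg_facts(2)[OF Ep(1) E0] qdE by simp
  have EW: "poly E x = 0" if "x \<in> fspan q I0 dd" for x
    using that by (auto simp: E_def SP_def poly_prod)
  define P where "P = pcompose E (Lam - f)"
  have qP: "qlin q P" unfolding P_def by (intro qlin_pcompose qlin_diff Ep(1) qLam qf)
  have PV: "poly P v = 0" if "v \<in> V" for v
  proof -
    have "poly P v = poly E (- (poly f v - poly Lam v))" by (simp add: P_def poly_pcompose)
    also have "\<dots> = - poly E (poly f v - poly Lam v)" by (rule qlin_poly_uminus[OF Ep(1)])
    also have "poly E (poly f v - poly Lam v) = 0" by (rule EW[OF VW[OF I0(4) that]])
    finally show ?thesis by simp
  qed
  obtain \<beta> R where bR: "qlin q \<beta>" "qlin q R" "\<forall>i\<ge>n. coeff R (q ^ i) = 0" "P = pcompose \<beta> PP + R"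
    using qdiv[OF n1 Pi_props(1) Pi_props(2) Pi_big qP] by blast
  have R0: "R = 0"
  proof (rule ccontr)
    assume R0: "R \<noteq> 0"
    have "V \<subseteq> {x. poly R x = 0}"
    proof
      fix v assume v: "v \<in> V"
      have "poly R v = poly P v - poly \<beta> (poly PP v)" using bR(4) by (simp add: poly_pcompose)
      thus "v \<in> {x. poly R x = 0}" using PV[OF v] Pi_V[OF v] qlin_poly0[OF bR(1)] by simp
    qed
    hence "card V \<le> card {x. poly R x = 0}" by (intro card_mono poly_roots_finite R0)
    also have "\<dots> \<le> degree R" by (rule card_poly_roots_bound[OF R0])
    also have "degree R \<le> q ^ (n - 1)"
      by (rule qlin_degree_le[OF bR(2)]) (use bR(3) in auto)
    also have "\<dots> < q ^ n" using n1 q_less by simp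
    finally show False using card_V by simp
  qed
  define w where "w = lcomp \<beta> (PP, 0) + lcomp E (- Lam, monom 1 1)"
  have wM: "w \<in> MM" unfolding w_def interp_module_def using bR(1) Ep(1) by blast
  have w_eq: "w = (- pcompose E f, E)"
  proof -
    have "pcompose \<beta> PP = pcompose E Lam - pcompose E f"
      using bR(4) R0 by (simp add: P_def pcompose_right_diff[OF Ep(1)])
    thus ?thesis
      by (simp add: w_def lcomp_def qlin_pcompose_0[OF bR(1)] pcompose_x[simplified]
          pcompose_right_uminus[OF Ep(1)])
  qed
  have inS: "(t, 2) \<in> supp q w" using Ep(2) by (simp add: supp_def comp_of_def w_eq)
  have mxw: "rank k m' < rank k (t, 2)" if "m' \<in> supp q w" "m' \<noteq> (t, 2)" for m'
  proof -
    obtain u j where m': "m' = (u, j)" by (cases m')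
    have j: "j = 1 \<or> j = 2" using that(1) m' by (auto simp: supp_def)
    thus ?thesis
    proof
      assume j1: "j = 1"
      hence "coeff (pcompose E f) (q ^ u) \<noteq> 0" using that(1) m' by (simp add: supp_def comp_of_def w_eq)
      then obtain s where s: "s \<le> u" "coeff E (q ^ s) \<noteq> 0" "coeff f (q ^ (u - s)) \<noteq> 0"
        using coeff_pcompose_q_nz[OF Ep(1) qf] by blast
      have "s \<le> t" by (rule Esmall[OF s(2)])
      moreover have "u - s \<le> k - 1" by (rule fbound[OF qf fk s(3)])
      ultimately have "u \<le> t + (k - 1)" using s(1) by linarith
      thus ?thesis using m' j1 by (simp add: rank_def wval_def)
    next
      assume j2: "j = 2"
      hence "coeff E (q ^ u) \<noteq> 0" using that(1) m' by (simp add: supp_def comp_of_def w_eq)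
      hence "u \<le> t" by (rule Esmall)
      moreover have "u \<noteq> t" using that(2) m' j2 by simp
      ultimately show ?thesis using m' j2 by (simp add: rank_def wval_def)
    qed
  qed
  have lmw: "lm q k w = (t, 2)" by (rule lm_eqI[OF inS mxw])
  have sw: "supp q w \<noteq> {}" using inS by auto
  obtain a1 a2 where a: "qlin q a1" "qlin q a2" "w = lcomp a1 b1 + lcomp a2 b2"
    using expand[OF wM] by blast
  have qb1: "qpair q b1" and qb2: "qpair q b2" using M_qpair b_in by auto
  show ?thesis
  proof (cases "a2 = 0")
    case True
    hence w1: "w = lcomp a1 b1" using a(3) by (simp add: lcomp_0)
    show ?thesis
    proof (cases "a1 = 0")
      case True thus ?thesis using w1 sw by (simp add: lcomp_0 supp_0)
    next
      case False
      have "lm q k w = (qdeg q a1 + l1, 1)"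
        using lm_lcomp(1)[OF a(1) False qb1 sb(1)] w1 lm_b by simp
      thus ?thesis using lmw by simp
    qed
  next
    case a2: False
    have L2: "lm q k (lcomp a2 b2) = (qdeg q a2 + l2, 2)" and S2: "supp q (lcomp a2 b2) \<noteq> {}"
      using lm_lcomp[OF a(2) a2 qb2 sb(2)] lm_b by simp_all
    have "lm q k w = (qdeg q a2 + l2, 2)"
    proof (cases "a1 = 0")
      case True thus ?thesis using a(3) L2 by (simp add: lcomp_0)
    next
      case a1: False
      have L1: "lm q k (lcomp a1 b1) = (qdeg q a1 + l1, 1)" and S1: "supp q (lcomp a1 b1) \<noteq> {}"
        using lm_lcomp[OF a(1) a1 qb1 sb(1)] lm_b by simp_all
      have ne: "rank k (qdeg q a1 + l1, 1) \<noteq> rank k (qdeg q a2 + l2, 2)"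
        by (simp add: rank_def wval_def) presburger
      show ?thesis
      proof (cases "rank k (qdeg q a1 + l1, 1) < rank k (qdeg q a2 + l2, 2)")
        case True
        have "lm q k (lcomp a2 b2 + lcomp a1 b1) = lm q k (lcomp a2 b2)"
          by (rule lm_add(1)[OF S2 S1]) (use True in \<open>simp add: L1 L2\<close>)
        thus ?thesis using a(3) L2 by (simp add: add.commute)
      next
        case False
        hence lt: "rank k (qdeg q a2 + l2, 2) < rank k (qdeg q a1 + l1, 1)" using ne by simp
        have "lm q k (lcomp a1 b1 + lcomp a2 b2) = lm q k (lcomp a1 b1)"
          by (rule lm_add(1)[OF S1 S2]) (use lt in \<open>simp add: L1 L2\<close>)
        hence "lm q k w = (qdeg q a1 + l1, 1)" using a(3) L1 by simp
        thus ?thesis using lmw by simp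
      qed
    qed
    thus ?thesis using lmw by simp
  qed
qed

end

end

theorem lemma32:
  fixes q m n k :: nat and g r :: "nat \<Rightarrow> 'a::{field,finite}"
    and b1 b2 :: "'a poly \<times> 'a poly"
  assumes "prime_power q" and "m \<ge> 1" and "card (UNIV :: 'a set) = q ^ m"
    and "1 \<le> k" and "k \<le> n"
    and "fq_indep q g {..<n}"
    and "minimal_basis q k (interp_module q n g r) {b1, b2}"
    and "lpos q k b1 = 1" and "lpos q k b2 = 2"
  defines "t \<equiv> Min {dR q n c r | c. c \<in> gabidulin q n k g}"
  shows "wdeg q k b2 \<le> t + k - 1 \<and> qdeg q (snd b2) \<le> t \<and>
         wdeg q k b1 = qdeg q (fst b1) \<and> int (wdeg q k b1) \<ge> int n - int t"
proof -
  interpret gfq q m "TYPE('a)" by (rule gfq_inst[OF assms(1,2,3)])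
  interpret mset q m "TYPE('a)" n k g r b1 b2
    by unfold_locales (rule assms)+
  obtain c0 f where cw: "qlin q f" "f = 0 \<or> qdeg q f < k" "\<forall>i<n. c0 i = poly f (g i)"
    "Min {dR q n c r | c. c \<in> gabidulin q n k g} = dR q n c0 r"
    using codeword by blast
  have tt: "t = dR q n c0 r" using t_def cw(4) by simp
  have L2: "l2 \<le> t" by (rule part_l2[OF cw(1-3) tt])
  have L1: "n \<le> t + l1" by (rule part_l1[OF cw(1-3) tt])
  show ?thesis using wdeg_b qdeg_fst_b1 qdeg_snd_b2 L1 L2 assms(4) by auto
qed

end
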